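(* Let $M(E,I)$ be a free partially commutative monoid, and let $E_v\subseteq E$, $v\in V$, be the maximal subsets of mutually commuting generators. Let $\bigcup_{v\in V}\mathfrak F M(E_v)$ denote the full subcategory of $\mathfrak F M(E,I)$ whose objects are the elements of $\bigcup_{v\in V}M(E_v)$, where $M(E_v)\subseteq M(E,I)$ is the submonoid generated by $E_v$. Then the inclusion $\bigcup_{v\in V}\mathfrak F M(E_v)\subseteq \mathfrak F M(E,I)$ is strong coinitial.
   Context: Given a set $E$ (not necessarily finite) and an irreflexive symmetric relation $I\subseteq E\times E$, the free partially commutative monoid $M(E,I)$ is the monoid with generators $E$ and relations $ab=ba$ for all $(a,b)\in I$. A subset $S\subseteq E$ consists of mutually commuting generators if $(a,b)\in I$ for all distinct $a,b\in S$. For a monoid $M$, the factorization category $\mathfrak FM$ has objects the elements of $M$ and morphisms $\alpha\to\beta$ the pairs $(f,g)\in M\times M$ with $g\alpha f=\beta$; composition of $(f_1,g_1):\alpha\to\beta$ and $(f_2,g_2):\beta\to\gamma$ is $(f_1f_2,g_2g_1)$. A functor $S:\mathcal C\to\mathcal D$ between small categories is strong coinitial if for every object $d$ of $\mathcal D$ the comma category $S/d$ (objects: pairs $(c,\alpha)$ with $\alpha\in\mathcal D(S(c),d)$; morphisms $(c_1,\alpha_1)\to(c_2,\alpha_2)$: $f\in\mathcal C(c_1,c_2)$ with $\alpha_2\circ S(f)=\alpha_1$) is connected and acyclic, i.e. $\varinjlim{}_n^{S/d}\Delta\mathbb Z=0$ for $n>0$ and $\varinjlim{}_0^{S/d}\Delta\mathbb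 Z=\mathbb Z$; here $\Delta\mathbb Z$ is the constant functor with value $\mathbb Z$ and $\varinjlim{}_n$ denotes the left derived functors of the colimit. *)

theory Defs
  imports Main
begin

text \<open>Elements of M(E,I) are equivalence classes of words over E, where two words are
equivalent iff one is obtained from the other by finitely many swaps of adjacent
commuting letters.\<close>

inductive swap_step :: "('a \<times> 'a) set \<Rightarrow> 'a list \<Rightarrow> 'a list \<Rightarrow> bool" for I where
  "(a, b) \<in> I \<Longrightarrow> swap_step I (u @ [a, b] @ v) (u @ [b, a] @ v)"

definition teq :: "('a \<times> 'a) set \<Rightarrow> 'a list \<Rightarrow> 'a list \<Rightarrow> bool" where
  "teq I = (swap_step I)\<^sup>*\<^sup>*"

definition trace :: "('a \<times> 'a) set \<Rightarrow> 'a list \<Rightarrow> 'a list set" where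
  "trace I w = {v. teq I w v}"

definition pcmon :: "'a set \<Rightarrow> ('a \<times> 'a) set \<Rightarrow> 'a list set set" where
  "pcmon E I = trace I ` lists E"

definition tmult :: "('a \<times> 'a) set \<Rightarrow> 'a list set \<Rightarrow> 'a list set \<Rightarrow> 'a list set" where
  "tmult I \<alpha> \<beta> = (\<Union>{trace I (u @ v) | u v. u \<in> \<alpha> \<and> v \<in> \<beta>})"

definition commuting :: "('a \<times> 'a) set \<Rightarrow> 'a set \<Rightarrow> bool" where
  "commuting I S \<longleftrightarrow> (\<forall>a\<in>S. \<forall>b\<in>S. a \<noteq> b \<longrightarrow> (a, b) \<in> I)"

definition maximal_commuting :: "'a set \<Rightarrow> ('a \<times> 'a) set \<Rightarrow> 'a set \<Rightarrow> bool" where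
  "maximal_commuting E I S \<longleftrightarrow> S \<subseteq> E \<and> commuting I S \<and>
     (\<forall>T. T \<subseteq> E \<and> commuting I T \<and> S \<subseteq> T \<longrightarrow> T = S)"

text \<open>Objects of the union of the factorization categories of the submonoids M(E_v):
elements of M(E,I) lying in the submonoid generated by some maximal commuting E_v.\<close>
definition union_objs :: "'a set \<Rightarrow> ('a \<times> 'a) set \<Rightarrow> 'a list set set" where
  "union_objs E I = {trace I w | w S. maximal_commuting E I S \<and> w \<in> lists S}"

definition fhom :: "'a set \<Rightarrow> ('a \<times> 'a) set \<Rightarrow> 'a list set \<Rightarrow> 'a list set
    \<Rightarrow> ('a list set \<times> 'a list set) set" where
  "fhom E I \<alpha> \<beta> = {(f, g). f \<in> pcmon E I \<and> g \<in> pcmon E I \<and> tmult I (tmult I g \<alpha>) f = \<beta>}"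

text \<open>Composition: fcomp I h2 h1 is "h2 after h1"; for (f1,g1): \<alpha>\<rightarrow>\<beta> and (f2,g2): \<beta>\<rightarrow>\<gamma>
it is (f1 f2, g2 g1).\<close>
definition fcomp :: "('a \<times> 'a) set \<Rightarrow> ('a list set \<times> 'a list set) \<Rightarrow> ('a list set \<times> 'a list set)
    \<Rightarrow> ('a list set \<times> 'a list set)" where
  "fcomp I h2 h1 = (tmult I (fst h1) (fst h2), tmult I (snd h2) (snd h1))"

definition comma_objs :: "'a set \<Rightarrow> ('a \<times> 'a) set \<Rightarrow> 'a list set
    \<Rightarrow> ('a list set \<times> ('a list set \<times> 'a list set)) set" where
  "comma_objs E I d = {(c, h). c \<in> union_objs E I \<and> h \<in> fhom E I c d}"

definition comma_hom :: "'a set \<Rightarrow> ('a \<times> 'a) set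
    \<Rightarrow> ('a list set \<times> ('a list set \<times> 'a list set))
    \<Rightarrow> ('a list set \<times> ('a list set \<times> 'a list set))
    \<Rightarrow> ('a list set \<times> 'a list set) set" where
  "comma_hom E I x y = {h. h \<in> fhom E I (fst x) (fst y) \<and> fcomp I (snd y) h = snd x}"

text \<open>A small category is given by an object set Ob, hom-sets Hom x y and composition
cmp g f (= g \<circ> f).\<close>

definition nerve_simplices :: "'o set \<Rightarrow> ('o \<Rightarrow> 'o \<Rightarrow> 'm set) \<Rightarrow> nat \<Rightarrow> ('o list \<times> 'm list) set" where
  "nerve_simplices Ob Hom n = {(xs, fs). length xs = Suc n \<and> length fs = n \<and> set xs \<subseteq> Ob \<and>
      (\<forall>i<n. fs ! i \<in> Hom (xs ! i) (xs ! Suc i))}"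

definition face :: "('m \<Rightarrow> 'm \<Rightarrow> 'm) \<Rightarrow> nat \<Rightarrow> nat \<Rightarrow> ('o list \<times> 'm list) \<Rightarrow> ('o list \<times> 'm list)" where
  "face cmp n i s = (let xs = fst s; fs = snd s in
     if i = 0 then (tl xs, tl fs)
     else if i = n then (butlast xs, butlast fs)
     else (take i xs @ drop (Suc i) xs,
           take (i - 1) fs @ [cmp (fs ! i) (fs ! (i - 1))] @ drop (Suc i) fs))"

definition is_chain :: "'o set \<Rightarrow> ('o \<Rightarrow> 'o \<Rightarrow> 'm set) \<Rightarrow> nat \<Rightarrow> ('o list \<times> 'm list \<Rightarrow> int) \<Rightarrow> bool" where
  "is_chain Ob Hom n c \<longleftrightarrow> finite {s. c s \<noteq> 0} \<and> {s. c s \<noteq> 0} \<subseteq> nerve_simplices Ob Hom n"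

definition bdry :: "('m \<Rightarrow> 'm \<Rightarrow> 'm) \<Rightarrow> nat \<Rightarrow> ('o list \<times> 'm list \<Rightarrow> int) \<Rightarrow> ('o list \<times> 'm list \<Rightarrow> int)" where
  "bdry cmp n c = (\<lambda>t. \<Sum>s\<in>{s. c s \<noteq> 0}. \<Sum>i\<le>n. if face cmp n i s = t then (-1) ^ i * c s else 0)"

text \<open>Connected and acyclic: H_0 = \<int> (via the augmentation) and H_n = 0 for n > 0;
i.e. the augmented integral chain complex of the nerve is exact.\<close>
definition connected_acyclic :: "'o set \<Rightarrow> ('o \<Rightarrow> 'o \<Rightarrow> 'm set) \<Rightarrow> ('m \<Rightarrow> 'm \<Rightarrow> 'm) \<Rightarrow> bool" where
  "connected_acyclic Ob Hom cmp \<longleftrightarrow>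
     Ob \<noteq> {} \<and>
     (\<forall>c. is_chain Ob Hom 0 c \<and> (\<Sum>s\<in>{s. c s \<noteq> 0}. c s) = 0 \<longrightarrow>
          (\<exists>b. is_chain Ob Hom 1 b \<and> bdry cmp 1 b = c)) \<and>
     (\<forall>n\<ge>1. \<forall>c. is_chain Ob Hom n c \<and> bdry cmp n c = (\<lambda>_. 0) \<longrightarrow>
          (\<exists>b. is_chain Ob Hom (Suc n) b \<and> bdry cmp (Suc n) b = c))"

end

theory Submission
  imports Defs "HOL-Library.Poly_Mapping"
begin

definition del :: "nat \<Rightarrow> 'a list \<Rightarrow> 'a list" where
  "del i xs = take i xs @ drop (Suc i) xs"

definition sg :: "nat \<Rightarrow> ('b \<Rightarrow>\<^sub>0 int) \<Rightarrow> ('b \<Rightarrow>\<^sub>0 int)" where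
  "sg i x = frag_cmul ((-1)^i) x"

lemma sg_Suc: "sg (Suc i) x = - sg i x"
  by (simp add: sg_def)
lemma sg_0: "sg 0 x = x" by (simp add: sg_def)
lemma sg_add: "sg (i + j) x = sg i (sg j x)"
  by (simp add: sg_def power_add)
lemma sg_sg: "sg i (sg i x) = x"
  by (simp add: sg_def flip: power_add)
lemma sg_pred: "0 < k \<Longrightarrow> sg k x = - sg (k - 1) x"
  by (cases k) (auto simp: sg_Suc)
lemma sg_zero[simp]: "sg i 0 = 0" by (simp add: sg_def)
lemma sg_sum: "sg i (sum f A) = (\<Sum>a\<in>A. sg i (f a))"
  by (simp add: sg_def frag_cmul_sum)
lemma sg_minus: "sg i (- x) = - sg i x"
  unfolding sg_def by (rule poly_mapping_eqI) (simp add: lookup_uminus)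
lemma sg_plus: "sg i (x + y) = sg i x + sg i y"
  by (simp add: sg_def frag_cmul_distrib2)
lemma sg_diff: "sg i (x - y) = sg i x - sg i y"
  unfolding sg_def by (rule poly_mapping_eqI) (simp add: lookup_minus algebra_simps)
lemma frag_extend_sg: "frag_extend f (sg i x) = sg i (frag_extend f x)"
  by (simp add: sg_def frag_extend_cmul)

definition bd :: "nat \<Rightarrow> 'a list \<Rightarrow> ('a list \<Rightarrow>\<^sub>0 int)" where
  "bd n xs = (\<Sum>i\<le>n. sg i (frag_of (del i xs)))"

definition prism :: "('a \<Rightarrow> 'a) \<Rightarrow> ('a \<Rightarrow> 'a) \<Rightarrow> nat \<Rightarrow> 'a list \<Rightarrow> 'a list" where
  "prism F G i xs = map F (take (Suc i) xs) @ map G (drop i xs)"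

definition H :: "('a \<Rightarrow> 'a) \<Rightarrow> ('a \<Rightarrow> 'a) \<Rightarrow> nat \<Rightarrow> 'a list \<Rightarrow> ('a list \<Rightarrow>\<^sub>0 int)" where
  "H F G k xs = (\<Sum>i<k. sg i (frag_of (prism F G i xs)))"

definition QQ :: "('a \<Rightarrow> 'a) \<Rightarrow> ('a \<Rightarrow> 'a) \<Rightarrow> nat \<Rightarrow> 'a list \<Rightarrow> 'a list" where
  "QQ F G i xs = map F (take i xs) @ map G (drop i xs)"

lemma face_lt:
  assumes "j < i" "i < length xs"
  shows "del j (prism F G i xs) = prism F G (i - 1) (del j xs)"
  using assms unfolding del_def prism_def
  by (simp add: take_map drop_map drop_take)

lemma face_eq:
  assumes "i < length xs"
  shows "del i (prism F G i xs) = QQ F G i xs"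
  using assms unfolding del_def prism_def QQ_def
  by (simp add: take_map drop_map)

lemma face_Suc:
  assumes "i < length xs"
  shows "del (Suc i) (prism F G i xs) = QQ F G (Suc i) xs"
  using assms unfolding del_def prism_def QQ_def
  by (simp add: take_map drop_map)

lemma face_gt:
  assumes "Suc i < j" "j \<le> length xs"
  shows "del j (prism F G i xs) = prism F G i (del (j - 1) xs)"
  using assms unfolding del_def prism_def
  by (simp add: take_map drop_map take_drop)

lemma QQ_0: "QQ F G 0 xs = map G xs" by (simp add: QQ_def)
lemma QQ_len: "QQ F G (length xs) xs = map F xs" by (simp add: QQ_def)


lemma sum_split3:
  fixes f :: "nat \<Rightarrow> 'b::ab_group_add"
  assumes "i \<le> n"
  shows "(\<Sum>j\<le>Suc n. f j) = (\<Sum>j<i. f j) + f i + f (Suc i) + (\<Sum>j\<in>{Suc (Suc i)..Suc n}. f j)"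
proof -
  have eq: "{..Suc n} = ({..<i} \<union> {i, Suc i}) \<union> {Suc (Suc i)..Suc n}" using assms by auto
  have "(\<Sum>j\<le>Suc n. f j) = sum f (({..<i} \<union> {i, Suc i}) \<union> {Suc (Suc i)..Suc n})"
    by (subst eq) (rule refl)
  also have "\<dots> = sum f ({..<i} \<union> {i, Suc i}) + sum f {Suc (Suc i)..Suc n}"
    by (rule sum.union_disjoint) auto
  also have "sum f ({..<i} \<union> {i, Suc i}) = sum f {..<i} + sum f {i, Suc i}"
    by (rule sum.union_disjoint) auto
  finally show ?thesis by simp
qed

lemma key_identity:
  assumes len: "length xs = Suc n"
  shows "frag_extend (bd (Suc n)) (H F G (Suc n) xs) + frag_extend (H F G n) (bd n xs)
         = frag_of (map G xs) - frag_of (map F xs)"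
proof -
  define X where "X i j = frag_of (prism F G i (del j xs))" for i j
  define Q where "Q i = frag_of (QQ F G i xs)" for i
  have e1: "frag_extend (bd (Suc n)) (H F G (Suc n) xs) = (\<Sum>i<Suc n. sg i (bd (Suc n) (prism F G i xs)))"
    unfolding H_def by (simp only: frag_extend_sum[OF finite_lessThan] o_def frag_extend_sg frag_extend_of)
  have e2: "frag_extend (H F G n) (bd n xs) = (\<Sum>j\<le>n. sg j (H F G n (del j xs)))"
    by (simp add: bd_def frag_extend_sum frag_extend_sg o_def)
  have spl: "bd (Suc n) (prism F G i xs) = (\<Sum>j<i. sg j (X (i-1) j)) + sg i (Q i) - sg i (Q (Suc i))
       + (\<Sum>j\<in>{Suc (Suc i)..Suc n}. sg j (X i (j-1)))" if "i < Suc n" for i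
  proof -
    have "bd (Suc n) (prism F G i xs) = (\<Sum>j<i. sg j (frag_of (del j (prism F G i xs)))) + sg i (frag_of (del i (prism F G i xs)))
       + sg (Suc i) (frag_of (del (Suc i) (prism F G i xs))) + (\<Sum>j\<in>{Suc (Suc i)..Suc n}. sg j (frag_of (del j (prism F G i xs))))"
      unfolding bd_def by (rule sum_split3) (use that in auto)
    also have "\<dots> = (\<Sum>j<i. sg j (X (i-1) j)) + sg i (Q i) - sg i (Q (Suc i))
       + (\<Sum>j\<in>{Suc (Suc i)..Suc n}. sg j (X i (j-1)))"
      using that len
      by (simp add: X_def Q_def face_lt face_eq face_Suc face_gt sg_Suc)
    finally show ?thesis .
  qed
  have "(\<Sum>i<Suc n. sg i (bd (Suc n) (prism F G i xs)))
     = (\<Sum>i<Suc n. \<Sum>j<i. sg (i+j) (X (i-1) j)) + (\<Sum>i<Suc n. Q i - Q (Suc i))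
       + (\<Sum>i<Suc n. \<Sum>j\<in>{Suc (Suc i)..Suc n}. sg (i+j) (X i (j-1)))"
  proof -
    have "(\<Sum>i<Suc n. sg i (bd (Suc n) (prism F G i xs))) = (\<Sum>i<Suc n. (\<Sum>j<i. sg (i+j) (X (i-1) j)) + (Q i - Q (Suc i))
       + (\<Sum>j\<in>{Suc (Suc i)..Suc n}. sg (i+j) (X i (j-1))))"
      by (rule sum.cong[OF refl]) (simp add: spl sg_plus sg_diff sg_sum sg_sg sg_add)
    then show ?thesis by (simp only: sum.distrib)
  qed
  also have "(\<Sum>i<Suc n. Q i - Q (Suc i)) = Q 0 - Q (Suc n)"
    by (rule sum_lessThan_telescope')
  also have "(\<Sum>i<Suc n. \<Sum>j<i. sg (i+j) (X (i-1) j)) = - (\<Sum>p\<in>{(i,j). j \<le> i \<and> i < n}. sg (fst p + snd p) (X (fst p) (snd p)))"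
  proof -
    have "(\<Sum>i<Suc n. \<Sum>j<i. sg (i+j) (X (i-1) j)) = (\<Sum>(i,j)\<in>(SIGMA i:{..<Suc n}. {..<i}). sg (i+j) (X (i-1) j))"
      by (rule sum.Sigma) auto
    also have "\<dots> = (\<Sum>p\<in>{(i,j). j \<le> i \<and> i < n}. - sg (fst p + snd p) (X (fst p) (snd p)))"
      by (rule sum.reindex_bij_witness[where i="\<lambda>(i,j). (Suc i, j)" and j="\<lambda>(i,j). (i - 1, j)"])
         (auto simp: sg_Suc sg_pred[of "_ + _"])
    finally show ?thesis by (simp add: sum_negf)
  qed
  also have "(\<Sum>i<Suc n. \<Sum>j\<in>{Suc (Suc i)..Suc n}. sg (i+j) (X i (j-1))) = - (\<Sum>p\<in>{(i,j). i < j \<and> j \<le> n}. sg (fst p + snd p) (X (fst p) (snd p)))"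
  proof -
    have "(\<Sum>i<Suc n. \<Sum>j\<in>{Suc (Suc i)..Suc n}. sg (i+j) (X i (j-1))) = (\<Sum>(i,j)\<in>(SIGMA i:{..<Suc n}. {Suc (Suc i)..Suc n}). sg (i+j) (X i (j-1)))"
      by (rule sum.Sigma) auto
    also have "\<dots> = (\<Sum>p\<in>{(i,j). i < j \<and> j \<le> n}. - sg (fst p + snd p) (X (fst p) (snd p)))"
      by (rule sum.reindex_bij_witness[where i="\<lambda>(i,j). (i, Suc j)" and j="\<lambda>(i,j). (i, j - 1)"])
         (auto simp: sg_Suc sg_pred[of "_ + _"])
    finally show ?thesis by (simp add: sum_negf)
  qed
  finally have A: "frag_extend (bd (Suc n)) (H F G (Suc n) xs) = - (\<Sum>p\<in>{(i,j). j \<le> i \<and> i < n}. sg (fst p + snd p) (X (fst p) (snd p)))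
    + (Q 0 - Q (Suc n)) - (\<Sum>p\<in>{(i,j). i < j \<and> j \<le> n}. sg (fst p + snd p) (X (fst p) (snd p)))"
    using e1 by simp
  have B: "frag_extend (H F G n) (bd n xs) = (\<Sum>p\<in>{(i,j). j \<le> i \<and> i < n}. sg (fst p + snd p) (X (fst p) (snd p)))
    + (\<Sum>p\<in>{(i,j). i < j \<and> j \<le> n}. sg (fst p + snd p) (X (fst p) (snd p)))"
  proof -
    have "frag_extend (H F G n) (bd n xs) = (\<Sum>j\<le>n. \<Sum>i<n. sg (j+i) (X i j))"
      unfolding e2 H_def X_def by (simp add: sg_sum sg_add)
    also have "\<dots> = (\<Sum>(j,i)\<in>(SIGMA j:{..n}. {..<n}). sg (j+i) (X i j))"
      by (rule sum.Sigma) auto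
    also have "\<dots> = (\<Sum>p\<in>{(i,j). i < n \<and> j \<le> n}. sg (fst p + snd p) (X (fst p) (snd p)))"
      by (rule sum.reindex_bij_witness[where i="\<lambda>(i,j). (j, i)" and j="\<lambda>(i,j). (j, i)"])
         (auto simp: add.commute)
    also have "{(i,j). i < n \<and> j \<le> n} = {(i,j). j \<le> i \<and> i < n} \<union> {(i,j). i < j \<and> j \<le> n}"
      by auto
    also have "(\<Sum>p\<in>{(i,j). j \<le> i \<and> i < n} \<union> {(i,j). i < j \<and> j \<le> n}. sg (fst p + snd p) (X (fst p) (snd p)))
       = (\<Sum>p\<in>{(i,j). j \<le> i \<and> i < n}. sg (fst p + snd p) (X (fst p) (snd p)))
        + (\<Sum>p\<in>{(i,j). i < j \<and> j \<le> n}. sg (fst p + snd p) (X (fst p) (snd p)))"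
    proof (rule sum.union_disjoint)
      show "finite {(i,j). j \<le> i \<and> i < n}"
        by (rule finite_subset[of _ "{..n} \<times> {..n}"]) auto
      show "finite {(i,j). i < j \<and> j \<le> n}"
        by (rule finite_subset[of _ "{..n} \<times> {..n}"]) auto
    qed auto
    finally show ?thesis .
  qed
  have "Q 0 = frag_of (map G xs)" "Q (Suc n) = frag_of (map F xs)"
    using len QQ_len[of F G xs] by (auto simp: Q_def QQ_0)
  then show ?thesis using A B by simp
qed

section \<open>Abstract acyclicity via homotopies\<close>

lemma frag_extend_frag_extend:
  "frag_extend f (frag_extend g z) = frag_extend (\<lambda>x. frag_extend f (g x)) z"
  using subset_UNIV
  by (induction z rule: frag_induction) (auto simp: frag_extend_diff)

lemma frag_extend_const:
  "frag_extend (\<lambda>_. v) z = frag_cmul (\<Sum>x\<in>Poly_Mapping.keys z. Poly_Mapping.lookup z x) v"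
  unfolding frag_extend_def
  by (rule poly_mapping_eqI) (simp add: lookup_sum sum_distrib_right)

lemma frag_cmul_diff2: "frag_cmul c (a - b) = frag_cmul c a - frag_cmul c b"
  by (rule poly_mapping_eqI) (simp add: lookup_minus algebra_simps)

lemma frag_extend_diff_fun: "frag_extend f z - frag_extend g z = frag_extend (\<lambda>x. f x - g x) z"
  unfolding frag_extend_def by (simp add: frag_cmul_diff2 sum_subtractf)

lemma frag_extend_add_fun: "frag_extend (\<lambda>x. f x + g x) z = frag_extend f z + frag_extend g z"
  unfolding frag_extend_def by (simp add: frag_cmul_distrib2 sum.distrib)

definition chs :: "'o set \<Rightarrow> ('o \<Rightarrow> 'o \<Rightarrow> bool) \<Rightarrow> nat \<Rightarrow> 'o list set" where
  "chs Ob R n = {xs. length xs = Suc n \<and> set xs \<subseteq> Ob \<and> (\<forall>i<n. R (xs!i) (xs!Suc i))}"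

definition Dn :: "nat \<Rightarrow> ('o list \<Rightarrow>\<^sub>0 int) \<Rightarrow> ('o list \<Rightarrow>\<^sub>0 int)" where
  "Dn n z = frag_extend (bd n) z"

definition mapc :: "('o \<Rightarrow> 'o) \<Rightarrow> ('o list \<Rightarrow>\<^sub>0 int) \<Rightarrow> ('o list \<Rightarrow>\<^sub>0 int)" where
  "mapc F z = frag_extend (\<lambda>xs. frag_of (map F xs)) z"

definition aug :: "('b \<Rightarrow>\<^sub>0 int) \<Rightarrow> int" where
  "aug z = (\<Sum>x\<in>Poly_Mapping.keys z. Poly_Mapping.lookup z x)"

definition hom_ok :: "'o set \<Rightarrow> ('o \<Rightarrow> 'o \<Rightarrow> bool) \<Rightarrow> ('o \<Rightarrow> 'o) \<Rightarrow> bool" where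
  "hom_ok Ob R F \<longleftrightarrow> (\<forall>x\<in>Ob. F x \<in> Ob) \<and> (\<forall>x\<in>Ob. \<forall>y\<in>Ob. R x y \<longrightarrow> R (F x) (F y))"

definition htp :: "'o set \<Rightarrow> ('o \<Rightarrow> 'o \<Rightarrow> bool) \<Rightarrow> ('o \<Rightarrow> 'o) \<Rightarrow> ('o \<Rightarrow> 'o) \<Rightarrow> bool" where
  "htp Ob R F G \<longleftrightarrow> (\<forall>n z. Poly_Mapping.keys z \<subseteq> chs Ob R n \<longrightarrow> (0 < n \<longrightarrow> Dn n z = 0) \<longrightarrow>
      (\<exists>b. Poly_Mapping.keys b \<subseteq> chs Ob R (Suc n) \<and> mapc G z - mapc F z = Dn (Suc n) b))"

lemma Dn_diff: "Dn n (a - b) = Dn n a - Dn n b"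
  by (simp add: Dn_def frag_extend_diff)
lemma Dn_add: "Dn n (a + b) = Dn n a + Dn n b"
  by (simp add: Dn_def frag_extend_add)
lemma Dn_minus: "Dn n (- a) = - Dn n a"
  by (simp add: Dn_def frag_extend_minus)

lemma htp_refl: "htp Ob R F F"
  unfolding htp_def by (intro allI impI exI[of _ 0]) (auto simp: Dn_def)

lemma htp_sym: "htp Ob R F G \<Longrightarrow> htp Ob R G F"
  unfolding htp_def
proof (intro allI impI)
  fix n z
  assume h: "\<forall>n z. Poly_Mapping.keys z \<subseteq> chs Ob R n \<longrightarrow> (0 < n \<longrightarrow> Dn n z = 0) \<longrightarrow>
      (\<exists>b. Poly_Mapping.keys b \<subseteq> chs Ob R (Suc n) \<and> mapc G z - mapc F z = Dn (Suc n) b)"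
    and z: "Poly_Mapping.keys z \<subseteq> chs Ob R n" "0 < n \<longrightarrow> Dn n z = 0"
  then obtain b where "Poly_Mapping.keys b \<subseteq> chs Ob R (Suc n)" "mapc G z - mapc F z = Dn (Suc n) b"
    by blast
  then show "\<exists>b. Poly_Mapping.keys b \<subseteq> chs Ob R (Suc n) \<and> mapc F z - mapc G z = Dn (Suc n) b"
  proof (intro exI[of _ "-b"] conjI)
    show "Poly_Mapping.keys (- b) \<subseteq> chs Ob R (Suc n)" using \<open>Poly_Mapping.keys b \<subseteq> chs Ob R (Suc n)\<close> by simp
    have "mapc F z - mapc G z = - (mapc G z - mapc F z)" by simp
    then show "mapc F z - mapc G z = Dn (Suc n) (- b)" using \<open>mapc G z - mapc F z = Dn (Suc n) b\<close> by (simp add: Dn_minus)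
  qed
qed

lemma htp_trans: "htp Ob R F G \<Longrightarrow> htp Ob R G K \<Longrightarrow> htp Ob R F K"
  unfolding htp_def
proof (intro allI impI)
  fix n z
  assume h1: "\<forall>n z. Poly_Mapping.keys z \<subseteq> chs Ob R n \<longrightarrow> (0 < n \<longrightarrow> Dn n z = 0) \<longrightarrow>
      (\<exists>b. Poly_Mapping.keys b \<subseteq> chs Ob R (Suc n) \<and> mapc G z - mapc F z = Dn (Suc n) b)"
    and h2: "\<forall>n z. Poly_Mapping.keys z \<subseteq> chs Ob R n \<longrightarrow> (0 < n \<longrightarrow> Dn n z = 0) \<longrightarrow>
      (\<exists>b. Poly_Mapping.keys b \<subseteq> chs Ob R (Suc n) \<and> mapc K z - mapc G z = Dn (Suc n) b)"
    and z: "Poly_Mapping.keys z \<subseteq> chs Ob R n" "0 < n \<longrightarrow> Dn n z = 0"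
  from h1 z obtain b1 where b1: "Poly_Mapping.keys b1 \<subseteq> chs Ob R (Suc n)" "mapc G z - mapc F z = Dn (Suc n) b1"
    by blast
  from h2 z obtain b2 where b2: "Poly_Mapping.keys b2 \<subseteq> chs Ob R (Suc n)" "mapc K z - mapc G z = Dn (Suc n) b2"
    by blast
  have "Poly_Mapping.keys (b1 + b2) \<subseteq> chs Ob R (Suc n)"
    using b1 b2 keys_add[of b1 b2] by blast
  moreover have "mapc K z - mapc F z = Dn (Suc n) (b1 + b2)"
    using b1 b2 by (simp add: Dn_add algebra_simps)
  ultimately show "\<exists>b. Poly_Mapping.keys b \<subseteq> chs Ob R (Suc n) \<and> mapc K z - mapc F z = Dn (Suc n) b"
    by blast
qed

lemma nth_prism:
  assumes "k < Suc (length xs)" "i < length xs"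
  shows "prism F G i xs ! k = (if k \<le> i then F (xs!k) else G (xs!(k-1)))"
proof (cases "k \<le> i")
  case True
  then show ?thesis using assms unfolding prism_def by (auto simp: nth_append min_def)
next
  case False
  then have e: "i + (k - Suc i) = k - 1" by simp
  have "k - Suc i < length xs - i" using assms False by simp
  then have "prism F G i xs ! k = G (xs ! (k - 1))"
    using assms False unfolding prism_def by (simp add: nth_append nth_drop e)
  then show ?thesis using False by simp
qed

lemma prism_chain:
  assumes xs: "xs \<in> chs Ob R n" and i: "i \<le> n"
    and F: "hom_ok Ob R F" and G: "hom_ok Ob R G" and FG: "\<forall>x\<in>Ob. R (F x) (G x)"
  shows "prism F G i xs \<in> chs Ob R (Suc n)"
proof -
  have len: "length xs = Suc n" and sub: "set xs \<subseteq> Ob" and rel: "\<forall>k<n. R (xs!k) (xs!Suc k)"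
    using xs by (auto simp: chs_def)
  have "length (prism F G i xs) = Suc (Suc n)"
    using len i by (simp add: prism_def)
  moreover have "set (prism F G i xs) \<subseteq> Ob"
    using sub F G unfolding prism_def hom_ok_def
    by (auto dest: in_set_takeD in_set_dropD)
  moreover have "R (prism F G i xs ! k) (prism F G i xs ! Suc k)" if k: "k < Suc n" for k
  proof -
    have xk: "xs ! k \<in> Ob" using sub k len nth_mem[of k xs] by auto
    show ?thesis
    proof (cases "Suc k \<le> i")
      case True
      then have "k < n" using i by simp
      then have "xs ! Suc k \<in> Ob" using sub len nth_mem[of "Suc k" xs] by auto
      with True xk rel \<open>k < n\<close> F show ?thesis using k len i
        by (simp add: nth_prism hom_ok_def)
    next
      case False
      show ?thesis
      proof (cases "k = i")
        case True
        with FG xk show ?thesis using k len i by (simp add: nth_prism)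
      next
        case False
        with \<open>\<not> Suc k \<le> i\<close> have ki: "i < k" by simp
        then have "xs ! (k - 1) \<in> Ob" using sub len k nth_mem[of "k - 1" xs] by auto
        moreover have "R (xs!(k-1)) (xs!Suc (k-1))" using rel[rule_format, of "k-1"] ki k by simp
        ultimately show ?thesis using ki k len i G xk
          by (simp add: nth_prism hom_ok_def)
      qed
    qed
  qed
  ultimately show ?thesis by (simp add: chs_def)
qed

lemma htp_le:
  assumes F: "hom_ok Ob R F" and G: "hom_ok Ob R G" and FG: "\<forall>x\<in>Ob. R (F x) (G x)"
  shows "htp Ob R F G"
  unfolding htp_def
proof (intro allI impI)
  fix n and z :: "'a list \<Rightarrow>\<^sub>0 int"
  assume z: "Poly_Mapping.keys z \<subseteq> chs Ob R n" and cyc: "0 < n \<longrightarrow> Dn n z = 0"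
  define b where "b = frag_extend (H F G (Suc n)) z"
  have "Poly_Mapping.keys b \<subseteq> chs Ob R (Suc n)"
  proof -
    have "Poly_Mapping.keys (H F G (Suc n) xs) \<subseteq> chs Ob R (Suc n)" if "xs \<in> chs Ob R n" for xs
    proof -
      have "Poly_Mapping.keys (H F G (Suc n) xs) \<subseteq> (\<Union>i<Suc n. Poly_Mapping.keys (sg i (frag_of (prism F G i xs))))"
        unfolding H_def by (rule keys_sum)
      also have "\<dots> \<subseteq> chs Ob R (Suc n)"
      proof (rule UN_least)
        fix i assume "i \<in> {..<Suc n}"
        then have "prism F G i xs \<in> chs Ob R (Suc n)" by (intro prism_chain[OF that _ F G FG]) simp
        then show "Poly_Mapping.keys (sg i (frag_of (prism F G i xs))) \<subseteq> chs Ob R (Suc n)"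
          unfolding sg_def using keys_cmul[of "(-1)^i" "frag_of (prism F G i xs)"] by auto
      qed
      finally show ?thesis .
    qed
    then have allk: "\<And>x. x \<in> Poly_Mapping.keys z \<Longrightarrow> Poly_Mapping.keys (H F G (Suc n) x) \<subseteq> chs Ob R (Suc n)"
      using z by blast
    have "Poly_Mapping.keys b \<subseteq> (\<Union>x \<in> Poly_Mapping.keys z. Poly_Mapping.keys (H F G (Suc n) x))"
      unfolding b_def by (rule keys_frag_extend)
    also have "\<dots> \<subseteq> chs Ob R (Suc n)"
      by (rule UN_least) (rule allk)
    finally show ?thesis .
  qed
  moreover have "mapc G z - mapc F z = Dn (Suc n) b"
  proof -
    have "mapc G z - mapc F z = frag_extend (\<lambda>xs. frag_of (map G xs) - frag_of (map F xs)) z"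
      unfolding mapc_def
      by (rule frag_extend_diff_fun)
    also have "\<dots> = frag_extend (\<lambda>xs. frag_extend (bd (Suc n)) (H F G (Suc n) xs) + frag_extend (H F G n) (bd n xs)) z"
    proof (rule frag_extend_eq)
      fix xs assume "xs \<in> Poly_Mapping.keys z"
      then have "length xs = Suc n" using z by (auto simp: chs_def)
      then show "frag_of (map G xs) - frag_of (map F xs) = frag_extend (bd (Suc n)) (H F G (Suc n) xs) + frag_extend (H F G n) (bd n xs)"
        by (simp add: key_identity)
    qed
    also have "\<dots> = Dn (Suc n) b + frag_extend (H F G n) (Dn n z)"
      unfolding b_def Dn_def
      unfolding b_def Dn_def by (simp add: frag_extend_add_fun frag_extend_frag_extend)
    also have "frag_extend (H F G n) (Dn n z) = 0"
    proof (cases n)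
      case 0
      have h0: "H F G 0 xs = 0" for xs by (simp add: H_def)
      show ?thesis by (rule frag_extend_eq_0) (simp add: 0 h0)
    next
      case (Suc m)
      then show ?thesis using cyc by simp
    qed
    finally show ?thesis by simp
  qed
  ultimately show "\<exists>b. Poly_Mapping.keys b \<subseteq> chs Ob R (Suc n) \<and> mapc G z - mapc F z = Dn (Suc n) b"
    by blast
qed

lemma del_del:
  assumes "i < j" "j < length xs"
  shows "del i (del j xs) = del (j - 1) (del i xs)"
  using assms unfolding del_def
  by (simp add: drop_take)

lemma bd_bd:
  assumes len: "length xs = Suc (Suc n)"
  shows "frag_extend (bd n) (bd (Suc n) xs) = 0"
proof -
  define Y where "Y i j = sg (i + j) (frag_of (del i (del j xs)))" for i j
  have "frag_extend (bd n) (bd (Suc n) xs) = (\<Sum>j\<le>Suc n. \<Sum>i\<le>n. Y i j)"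
    unfolding bd_def Y_def
    by (simp only: frag_extend_sum[OF finite_atMost] o_def frag_extend_sg frag_extend_of sg_sum sg_add add.commute)
  also have "\<dots> = (\<Sum>(j,i)\<in>(SIGMA j:{..Suc n}. {..n}). Y i j)"
    by (rule sum.Sigma) auto
  also have "\<dots> = (\<Sum>p\<in>{(i,j). i \<le> n \<and> j \<le> Suc n}. Y (fst p) (snd p))"
    by (rule sum.reindex_bij_witness[where i="\<lambda>(i,j). (j, i)" and j="\<lambda>(i,j). (j, i)"]) auto
  also have "{(i,j). i \<le> n \<and> j \<le> Suc n} = {(i,j). i < j \<and> j \<le> Suc n} \<union> {(i,j). j \<le> i \<and> i \<le> n}"
    by auto
  also have "(\<Sum>p\<in>{(i,j). i < j \<and> j \<le> Suc n} \<union> {(i,j). j \<le> i \<and> i \<le> n}. Y (fst p) (snd p))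
     = (\<Sum>p\<in>{(i,j). i < j \<and> j \<le> Suc n}. Y (fst p) (snd p)) + (\<Sum>p\<in>{(i,j). j \<le> i \<and> i \<le> n}. Y (fst p) (snd p))"
  proof (rule sum.union_disjoint)
    show "finite {(i,j). i < j \<and> j \<le> Suc n}"
      by (rule finite_subset[of _ "{..Suc n} \<times> {..Suc n}"]) auto
    show "finite {(i,j). j \<le> i \<and> i \<le> n}"
      by (rule finite_subset[of _ "{..Suc n} \<times> {..Suc n}"]) auto
  qed auto
  also have "(\<Sum>p\<in>{(i,j). i < j \<and> j \<le> Suc n}. Y (fst p) (snd p)) = (\<Sum>p\<in>{(i,j). j \<le> i \<and> i \<le> n}. - Y (fst p) (snd p))"
  proof (rule sum.reindex_bij_witness[where i="\<lambda>(i,j). (j, Suc i)" and j="\<lambda>(i,j). (j - 1, i)"])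
    fix a assume "a \<in> {(i,j). i < j \<and> j \<le> Suc n}"
    then obtain i j where a: "a = (i,j)" "i < j" "j \<le> Suc n" by auto
    then have dd: "del i (del j xs) = del (j - 1) (del i xs)" using len by (intro del_del) auto
    have eq: "i + j = Suc (j - 1 + i)" using a by simp
    have "Y i j = sg (Suc (j - 1 + i)) (frag_of (del (j - 1) (del i xs)))"
      unfolding Y_def by (simp only: dd eq)
    also have "\<dots> = - Y (j - 1) i" by (simp only: sg_Suc Y_def)
    finally show "- Y (fst ((\<lambda>(i, j). (j - 1, i)) a)) (snd ((\<lambda>(i, j). (j - 1, i)) a)) = Y (fst a) (snd a)"
      using a by simp
  qed auto
  finally show ?thesis by (simp add: sum_negf)
qed

lemma sum_sg: "(\<Sum>i\<le>N. sg i x) = (if even N then x else 0)"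
  by (induction N) (auto simp: sg_def)

lemma map_const_eq: "\<forall>x\<in>set xs. f x = p \<Longrightarrow> map f xs = replicate (length xs) p"
  by (induction xs) auto

lemma del_replicate: "i < k \<Longrightarrow> del i (replicate k p) = replicate (k - 1) p"
  unfolding del_def by (simp add: min_def replicate_add[symmetric])

lemma replicate_chs:
  assumes "p \<in> Ob" "R p p"
  shows "replicate (Suc n) p \<in> chs Ob R n"
  using assms unfolding chs_def by (auto simp del: replicate.simps)

theorem abstract_acyclic:
  fixes Fs :: "nat \<Rightarrow> 'o \<Rightarrow> 'o"
  assumes ok: "\<And>k. k \<le> m \<Longrightarrow> hom_ok Ob R (Fs k)"
    and first: "\<And>x. x \<in> Ob \<Longrightarrow> Fs 0 x = x"
    and last: "\<And>x. x \<in> Ob \<Longrightarrow> Fs m x = p0"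
    and p0: "p0 \<in> Ob" "R p0 p0"
    and steps: "\<And>k. k < m \<Longrightarrow> (\<forall>x\<in>Ob. R (Fs k x) (Fs (Suc k) x)) \<or> (\<forall>x\<in>Ob. R (Fs (Suc k) x) (Fs k x))"
  shows "\<And>z. Poly_Mapping.keys z \<subseteq> chs Ob R 0 \<Longrightarrow> aug z = 0 \<Longrightarrow> \<exists>b. Poly_Mapping.keys b \<subseteq> chs Ob R 1 \<and> Dn 1 b = z"
    and "\<And>n z. 1 \<le> n \<Longrightarrow> Poly_Mapping.keys z \<subseteq> chs Ob R n \<Longrightarrow> Dn n z = 0 \<Longrightarrow>
           \<exists>b. Poly_Mapping.keys b \<subseteq> chs Ob R (Suc n) \<and> Dn (Suc n) b = z"
proof -
  have htpk: "k \<le> m \<Longrightarrow> htp Ob R (Fs 0) (Fs k)" for k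
  proof (induction k)
    case 0 show ?case by (rule htp_refl)
  next
    case (Suc k)
    then have "htp Ob R (Fs 0) (Fs k)" by simp
    moreover have "htp Ob R (Fs k) (Fs (Suc k))"
      using steps[of k] Suc.prems ok[of k] ok[of "Suc k"]
      by (auto intro: htp_le htp_sym)
    ultimately show ?case by (rule htp_trans)
  qed
  then have htpm: "htp Ob R (Fs 0) (Fs m)" by simp
  have main: "\<exists>b. Poly_Mapping.keys b \<subseteq> chs Ob R (Suc n) \<and> z = frag_cmul (aug z) (frag_of (replicate (Suc n) p0)) - Dn (Suc n) b"
    if z: "Poly_Mapping.keys z \<subseteq> chs Ob R n" and cyc: "0 < n \<longrightarrow> Dn n z = 0" for n z
  proof -
    obtain b where b: "Poly_Mapping.keys b \<subseteq> chs Ob R (Suc n)" "mapc (Fs m) z - mapc (Fs 0) z = Dn (Suc n) b"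
      using htpm z cyc unfolding htp_def by blast
    have "mapc (Fs 0) z = frag_extend frag_of z"
      unfolding mapc_def
    proof (rule frag_extend_eq)
      fix xs assume "xs \<in> Poly_Mapping.keys z"
      then have "set xs \<subseteq> Ob" using z by (auto simp: chs_def)
      then have "map (Fs 0) xs = xs" using first by (induction xs) auto
      then show "frag_of (map (Fs 0) xs) = frag_of xs" by simp
    qed
    then have m0: "mapc (Fs 0) z = z" by (simp flip: frag_expansion)
    have "mapc (Fs m) z = frag_extend (\<lambda>_. frag_of (replicate (Suc n) p0)) z"
      unfolding mapc_def
    proof (rule frag_extend_eq)
      fix xs assume "xs \<in> Poly_Mapping.keys z"
      then have "set xs \<subseteq> Ob" "length xs = Suc n" using z by (auto simp: chs_def)
      then have "map (Fs m) xs = replicate (Suc n) p0" using last map_const_eq[of xs "Fs m" p0] by auto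
      then show "frag_of (map (Fs m) xs) = frag_of (replicate (Suc n) p0)" by simp
    qed
    then have mm: "mapc (Fs m) z = frag_cmul (aug z) (frag_of (replicate (Suc n) p0))"
      by (simp add: frag_extend_const aug_def)
    show ?thesis using b m0 mm by (intro exI[of _ b]) (auto simp: algebra_simps)
  qed
  show "\<exists>b. Poly_Mapping.keys b \<subseteq> chs Ob R 1 \<and> Dn 1 b = z"
    if z: "Poly_Mapping.keys z \<subseteq> chs Ob R 0" and a: "aug z = 0" for z
  proof -
    obtain b where b: "Poly_Mapping.keys b \<subseteq> chs Ob R 1" "z = frag_cmul (aug z) (frag_of (replicate 1 p0)) - Dn 1 b"
      using main[OF z] by auto
    then show ?thesis using a by (intro exI[of _ "-b"]) (auto simp: Dn_minus)
  qed
  show "\<exists>b. Poly_Mapping.keys b \<subseteq> chs Ob R (Suc n) \<and> Dn (Suc n) b = z"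
    if n: "1 \<le> n" and z: "Poly_Mapping.keys z \<subseteq> chs Ob R n" and cyc: "Dn n z = 0" for n z
  proof -
    obtain b where b: "Poly_Mapping.keys b \<subseteq> chs Ob R (Suc n)" "z = frag_cmul (aug z) (frag_of (replicate (Suc n) p0)) - Dn (Suc n) b"
      using main[OF z] n cyc by auto
    have bdrep: "bd N (replicate (Suc N) p0) = (\<Sum>i\<le>N. sg i (frag_of (replicate N p0)))" for N
      unfolding bd_def
    proof (rule sum.cong[OF refl])
      fix i assume "i \<in> {..N}"
      then have "del i (replicate (Suc N) p0) = replicate N p0"
        using del_replicate[of i "Suc N" p0] by simp
      then show "sg i (frag_of (del i (replicate (Suc N) p0))) = sg i (frag_of (replicate N p0))" by simp
    qed
    show ?thesis
    proof (cases "even n")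
      case True
      have DD: "Dn n (Dn (Suc n) b) = 0"
        unfolding Dn_def frag_extend_frag_extend
      proof (rule frag_extend_eq_0)
        fix xs assume "xs \<in> Poly_Mapping.keys b"
        then have "length xs = Suc (Suc n)" using b by (auto simp: chs_def)
        then show "frag_extend (bd n) (bd (Suc n) xs) = 0" by (rule bd_bd)
      qed
      have "Dn n (frag_of (replicate (Suc n) p0)) = frag_of (replicate n p0)"
        unfolding Dn_def frag_extend_of bdrep sum_sg using True by simp
      then have "0 = frag_cmul (aug z) (frag_of (replicate n p0))"
        using cyc b(2) DD by (metis Dn_def Dn_diff diff_zero frag_extend_cmul)
      then have "aug z = 0" by simp
      then show ?thesis using b by (intro exI[of _ "-b"]) (auto simp: Dn_minus)
    next
      case False
      have "Dn (Suc n) (frag_of (replicate (Suc (Suc n)) p0)) = frag_of (replicate (Suc n) p0)"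
        unfolding Dn_def frag_extend_of bdrep sum_sg using False by simp
      then have e: "z = Dn (Suc n) (frag_cmul (aug z) (frag_of (replicate (Suc (Suc n)) p0)) - b)"
      proof -
        have "Dn (Suc n) (frag_cmul (aug z) (frag_of (replicate (Suc (Suc n)) p0)) - b)
          = frag_cmul (aug z) (Dn (Suc n) (frag_of (replicate (Suc (Suc n)) p0))) - Dn (Suc n) b"
          by (simp only: Dn_diff) (simp only: Dn_def frag_extend_cmul)
        then show ?thesis using b(2) \<open>Dn (Suc n) (frag_of (replicate (Suc (Suc n)) p0)) = frag_of (replicate (Suc n) p0)\<close>
          by simp
      qed
      have "Poly_Mapping.keys (frag_cmul (aug z) (frag_of (replicate (Suc (Suc n)) p0)) - b) \<subseteq> chs Ob R (Suc n)"
      proof -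
        have "Poly_Mapping.keys (frag_cmul (aug z) (frag_of (replicate (Suc (Suc n)) p0))) \<subseteq> chs Ob R (Suc n)"
          using keys_cmul[of "aug z" "frag_of (replicate (Suc (Suc n)) p0)"] replicate_chs[of p0 Ob R "Suc n", OF p0] by auto
        moreover have "Poly_Mapping.keys (frag_cmul (aug z) (frag_of (replicate (Suc (Suc n)) p0)) - b)
          \<subseteq> Poly_Mapping.keys (frag_cmul (aug z) (frag_of (replicate (Suc (Suc n)) p0))) \<union> Poly_Mapping.keys b"
          by (rule keys_diff)
        ultimately show ?thesis using b(1) by auto
      qed
      then show ?thesis using e by (intro exI[of _ "frag_cmul (aug z) (frag_of (replicate (Suc (Suc n)) p0)) - b"]) simp
    qed
  qed
qed

context
  fixes Ob :: "'o set" and Hom :: "'o \<Rightarrow> 'o \<Rightarrow> 'm set" and cmp :: "'m \<Rightarrow> 'm \<Rightarrow> 'm"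
begin

definition mor :: "'o \<Rightarrow> 'o \<Rightarrow> 'm" where
  "mor x y = (SOME h. h \<in> Hom x y)"

definition mk :: "'o list \<Rightarrow> 'o list \<times> 'm list" where
  "mk xs = (xs, map (\<lambda>k. mor (xs!k) (xs!Suc k)) [0..<length xs - 1])"

lemma fst_mk[simp]: "fst (mk xs) = xs" by (simp add: mk_def)

lemma inj_mk: "inj mk"
  by (metis fst_mk injI)

lemma mor_in: "Hom x y \<noteq> {} \<Longrightarrow> mor x y \<in> Hom x y"
  unfolding mor_def by (auto intro: someI)


lemma snd_mk_nth: "k < length xs - 1 \<Longrightarrow> snd (mk xs) ! k = mor (xs!k) (xs!Suc k)"
  by (simp add: mk_def)
lemma length_snd_mk: "length (snd (mk xs)) = length xs - 1"
  by (simp add: mk_def)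

context
  assumes clos: "\<And>x y z f g. x \<in> Ob \<Longrightarrow> y \<in> Ob \<Longrightarrow> z \<in> Ob \<Longrightarrow> f \<in> Hom x y \<Longrightarrow> g \<in> Hom y z \<Longrightarrow> cmp g f \<in> Hom x z"
    and thin: "\<And>x y f g. x \<in> Ob \<Longrightarrow> y \<in> Ob \<Longrightarrow> f \<in> Hom x y \<Longrightarrow> g \<in> Hom x y \<Longrightarrow> f = g"
begin

abbreviation RR where "RR x y \<equiv> Hom x y \<noteq> {}"

lemma nerve_eq: "nerve_simplices Ob Hom n = mk ` chs Ob RR n"
proof
  show "nerve_simplices Ob Hom n \<subseteq> mk ` chs Ob RR n"
  proof
    fix s assume s: "s \<in> nerve_simplices Ob Hom n"
    obtain xs fs where sx: "s = (xs, fs)" by (cases s)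
    have len: "length xs = Suc n" "length fs = n" and sub: "set xs \<subseteq> Ob"
      and h: "\<forall>i<n. fs ! i \<in> Hom (xs ! i) (xs ! Suc i)"
      using s sx by (auto simp: nerve_simplices_def)
    have ch: "xs \<in> chs Ob RR n" using len sub h by (auto simp: chs_def)
    have "fs = snd (mk xs)"
    proof (rule nth_equalityI)
      show "length fs = length (snd (mk xs))" using len by (simp add: length_snd_mk)
      fix k assume "k < length fs"
      then have k: "k < n" using len by simp
      have "xs ! k \<in> Ob" "xs ! Suc k \<in> Ob" using sub len k nth_mem[of k xs] nth_mem[of "Suc k" xs] by auto
      moreover have "mor (xs!k) (xs!Suc k) \<in> Hom (xs!k) (xs!Suc k)" using h k by (intro mor_in) auto
      ultimately have "fs ! k = mor (xs!k) (xs!Suc k)" using h k thin by blast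
      then show "fs ! k = snd (mk xs) ! k" using k len by (simp add: snd_mk_nth)
    qed
    then have "s = mk xs" using sx by (simp add: mk_def)
    then show "s \<in> mk ` chs Ob RR n" using ch by blast
  qed
  show "mk ` chs Ob RR n \<subseteq> nerve_simplices Ob Hom n"
  proof
    fix s assume "s \<in> mk ` chs Ob RR n"
    then obtain xs where xs: "xs \<in> chs Ob RR n" "s = mk xs" by blast
    then have len: "length xs = Suc n" and sub: "set xs \<subseteq> Ob" and r: "\<forall>i<n. RR (xs!i) (xs!Suc i)"
      by (auto simp: chs_def)
    have "\<forall>i<n. snd (mk xs) ! i \<in> Hom (xs ! i) (xs ! Suc i)"
      using r len by (auto simp: snd_mk_nth intro: mor_in)
    moreover have "s = (xs, snd (mk xs))" using xs by (simp add: mk_def)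
    ultimately show "s \<in> nerve_simplices Ob Hom n"
      using len sub by (simp add: nerve_simplices_def length_snd_mk)
  qed
qed

lemma face_mk:
  assumes xs: "xs \<in> chs Ob RR n" and n: "1 \<le> n" and i: "i \<le> n"
  shows "face cmp n i (mk xs) = mk (del i xs)"
proof -
  have len: "length xs = Suc n" and sub: "set xs \<subseteq> Ob" and r: "\<forall>k<n. RR (xs!k) (xs!Suc k)"
    using xs by (auto simp: chs_def)
  have inOb: "xs ! k \<in> Ob" if "k \<le> n" for k using sub len that nth_mem[of k xs] by auto
  let ?fs = "snd (mk xs)"
  have lfs: "length ?fs = n" using len by (simp add: length_snd_mk)
  have lenD: "length (del i xs) = n" using len i by (simp add: del_def)
  show ?thesis
  proof (cases "i = 0")
    case True
    have "tl ?fs = snd (mk (del 0 xs))"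
    proof (rule nth_equalityI)
      show "length (tl ?fs) = length (snd (mk (del 0 xs)))" using lfs len by (simp add: length_snd_mk del_def)
      fix k assume "k < length (tl ?fs)"
      then have k: "k < n - 1" using lfs by simp
      have "tl ?fs ! k = ?fs ! Suc k" using k lfs by (simp add: nth_tl)
      also have "\<dots> = mor (xs ! Suc k) (xs ! Suc (Suc k))" using k len by (simp add: snd_mk_nth)
      also have "\<dots> = snd (mk (del 0 xs)) ! k" using k len by (simp add: snd_mk_nth del_def)
      finally show "tl ?fs ! k = snd (mk (del 0 xs)) ! k" .
    qed
    moreover have "tl xs = del 0 xs" by (simp add: del_def drop_Suc)
    ultimately show ?thesis using True by (simp add: face_def mk_def)
  next
    case False
    note i0 = False
    show ?thesis
    proof (cases "i = n")
      case True
      have "butlast ?fs = snd (mk (del n xs))"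
      proof (rule nth_equalityI)
        show "length (butlast ?fs) = length (snd (mk (del n xs)))" using lfs len by (simp add: length_snd_mk del_def)
        fix k assume "k < length (butlast ?fs)"
        then have k: "k < n - 1" using lfs by simp
        have "butlast ?fs ! k = ?fs ! k" using k lfs by (simp add: nth_butlast)
        also have "\<dots> = mor (xs ! k) (xs ! Suc k)" using k len by (simp add: snd_mk_nth)
        also have "\<dots> = snd (mk (del n xs)) ! k" using k len by (simp add: snd_mk_nth del_def nth_append)
        finally show "butlast ?fs ! k = snd (mk (del n xs)) ! k" .
      qed
      moreover have "butlast xs = del n xs" using len by (simp add: del_def butlast_conv_take)
      ultimately show ?thesis using True i0 by (simp add: face_def mk_def)
    next
      case False
      then have ilt: "i < n" using i by simp
      have "take (i - 1) ?fs @ [cmp (?fs ! i) (?fs ! (i - 1))] @ drop (Suc i) ?fs = snd (mk (del i xs))"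
      proof (rule nth_equalityI)
        show "length (take (i - 1) ?fs @ [cmp (?fs ! i) (?fs ! (i - 1))] @ drop (Suc i) ?fs) = length (snd (mk (del i xs)))"
          using lfs lenD ilt i0 by (simp add: length_snd_mk)
        fix k assume "k < length (take (i - 1) ?fs @ [cmp (?fs ! i) (?fs ! (i - 1))] @ drop (Suc i) ?fs)"
        then have k: "k < n - 1" using lfs ilt i0 by simp
        have dk: "del i xs ! k = (if k < i then xs ! k else xs ! Suc k)"
          using len k ilt by (simp add: del_def nth_append min_def)
        have dk1: "del i xs ! Suc k = (if Suc k < i then xs ! Suc k else xs ! Suc (Suc k))"
          using len k ilt by (simp add: del_def nth_append min_def)
        consider (lt) "k < i - 1" | (eq) "k = i - 1" | (gt) "i - 1 < k" by linarith
        then show "(take (i - 1) ?fs @ [cmp (?fs ! i) (?fs ! (i - 1))] @ drop (Suc i) ?fs) ! k = snd (mk (del i xs)) ! k"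
        proof cases
          case lt
          have "(take (i - 1) ?fs @ [cmp (?fs ! i) (?fs ! (i - 1))] @ drop (Suc i) ?fs) ! k = ?fs ! k"
            using lt lfs ilt by (simp add: nth_append)
          also have "\<dots> = mor (xs ! k) (xs ! Suc k)" using k len by (simp add: snd_mk_nth)
          also have "\<dots> = mor (del i xs ! k) (del i xs ! Suc k)"
          proof -
            have "k < i" "Suc k < i" using lt by auto
            then show ?thesis using dk dk1 by simp
          qed
          also have "\<dots> = snd (mk (del i xs)) ! k" using k lenD by (simp add: snd_mk_nth)
          finally show ?thesis .
        next
          case eq
          have "RR (xs ! (i - 1)) (xs ! Suc (i - 1))" using r ilt by simp
          then have "RR (xs ! (i - 1)) (xs ! i)" using i0 by simp
          then have m1: "?fs ! (i - 1) \<in> Hom (xs ! (i - 1)) (xs ! i)"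
            using ilt i0 len by (simp add: snd_mk_nth mor_in)
          have m2: "?fs ! i \<in> Hom (xs ! i) (xs ! Suc i)"
            using r ilt len by (simp add: snd_mk_nth mor_in)
          have c: "cmp (?fs ! i) (?fs ! (i - 1)) \<in> Hom (xs ! (i - 1)) (xs ! Suc i)"
            by (rule clos[OF inOb inOb inOb m1 m2]) (use ilt in auto)
          have ne: "Hom (xs ! (i - 1)) (xs ! Suc i) \<noteq> {}" using c by blast
          have "cmp (?fs ! i) (?fs ! (i - 1)) = mor (xs ! (i - 1)) (xs ! Suc i)"
            by (rule thin[OF inOb inOb c mor_in[OF ne]]) (use ilt in auto)
          moreover have "(take (i - 1) ?fs @ [cmp (?fs ! i) (?fs ! (i - 1))] @ drop (Suc i) ?fs) ! k = cmp (?fs ! i) (?fs ! (i - 1))"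
          proof -
            have lA: "length (take (i - 1) ?fs) = k" using eq lfs ilt by simp
            show ?thesis
              using nth_append_length[of "take (i - 1) ?fs" "cmp (?fs ! i) (?fs ! (i - 1))" "drop (Suc i) ?fs"] lA
              by simp
          qed
          moreover have "snd (mk (del i xs)) ! k = mor (xs ! (i - 1)) (xs ! Suc i)"
            using eq k lenD dk dk1 i0 by (simp add: snd_mk_nth)
          ultimately show ?thesis by simp
        next
          case gt
          have "(take (i - 1) ?fs @ [cmp (?fs ! i) (?fs ! (i - 1))] @ drop (Suc i) ?fs) ! k = ?fs ! Suc k"
          proof -
            have lA: "length (take (i - 1) ?fs) = i - 1" using lfs ilt by simp
            have e1: "k - (i - 1) = Suc (k - i)" using gt i0 by simp
            have "(take (i - 1) ?fs @ [cmp (?fs ! i) (?fs ! (i - 1))] @ drop (Suc i) ?fs) ! k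
                = ([cmp (?fs ! i) (?fs ! (i - 1))] @ drop (Suc i) ?fs) ! (k - (i - 1))"
              using gt by (simp only: nth_append lA) simp
            also have "\<dots> = drop (Suc i) ?fs ! (k - i)" unfolding e1 by simp
            also have "\<dots> = ?fs ! Suc k" using gt k lfs ilt by (simp add: nth_drop)
            finally show ?thesis .
          qed
          also have "\<dots> = mor (xs ! Suc k) (xs ! Suc (Suc k))" using k len by (simp add: snd_mk_nth)
          moreover have "\<not> k < i" "\<not> Suc k < i" using gt by auto
          ultimately show ?thesis using k lenD dk dk1 by (simp add: snd_mk_nth)
        qed
      qed
      moreover have "take i xs @ drop (Suc i) xs = del i xs" by (simp add: del_def)
      ultimately show ?thesis using i0 False by (simp add: face_def mk_def)
    qed
  qed
qed

definition toF :: "('o list \<times> 'm list \<Rightarrow> int) \<Rightarrow> ('o list \<Rightarrow>\<^sub>0 int)" where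
  "toF c = Abs_poly_mapping (\<lambda>xs. c (mk xs))"

definition ofF :: "('o list \<Rightarrow>\<^sub>0 int) \<Rightarrow> ('o list \<times> 'm list \<Rightarrow> int)" where
  "ofF z = (\<lambda>s. if s = mk (fst s) then Poly_Mapping.lookup z (fst s) else 0)"

lemma mk_eq_iff: "mk a = mk b \<longleftrightarrow> a = b"
  by (metis fst_mk)

lemma lookup_toF:
  assumes "finite {s. c s \<noteq> 0}"
  shows "Poly_Mapping.lookup (toF c) = (\<lambda>xs. c (mk xs))"
proof -
  have "{xs. c (mk xs) \<noteq> 0} = mk -` {s. c s \<noteq> 0}" by auto
  then have "finite {xs. c (mk xs) \<noteq> 0}" using finite_vimageI[OF assms inj_mk] by simp
  then show ?thesis unfolding toF_def by (simp add: Abs_poly_mapping_inverse)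
qed

lemma ofF_mk: "ofF z (mk xs) = Poly_Mapping.lookup z xs"
  by (simp add: ofF_def)

lemma supp_ofF: "{s. ofF z s \<noteq> 0} = mk ` Poly_Mapping.keys z"
proof
  show "{s. ofF z s \<noteq> 0} \<subseteq> mk ` Poly_Mapping.keys z"
  proof
    fix s assume "s \<in> {s. ofF z s \<noteq> 0}"
    then have "s = mk (fst s)" "Poly_Mapping.lookup z (fst s) \<noteq> 0" by (auto simp: ofF_def split: if_splits)
    then show "s \<in> mk ` Poly_Mapping.keys z" by (metis image_eqI in_keys_iff)
  qed
  show "mk ` Poly_Mapping.keys z \<subseteq> {s. ofF z s \<noteq> 0}"
    by (auto simp: ofF_mk in_keys_iff)
qed

lemma ofF_zero_imp: "ofF z = (\<lambda>_. 0) \<Longrightarrow> z = 0"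
  by (rule poly_mapping_eqI) (metis ofF_mk lookup_zero)

lemma lookup_bd: "Poly_Mapping.lookup (bd n xs) ys = (\<Sum>i\<le>n. if del i xs = ys then (-1)^i else 0)"
  unfolding bd_def sg_def by (simp add: lookup_sum) (rule sum.cong, auto)

lemma lookup_Dn: "Poly_Mapping.lookup (Dn n z) ys = (\<Sum>xs\<in>Poly_Mapping.keys z. Poly_Mapping.lookup z xs * Poly_Mapping.lookup (bd n xs) ys)"
  unfolding Dn_def frag_extend_def by (simp add: lookup_sum)

lemma keys_toF:
  assumes "is_chain Ob Hom n c"
  shows "Poly_Mapping.keys (toF c) \<subseteq> chs Ob RR n"
proof
  fix xs assume "xs \<in> Poly_Mapping.keys (toF c)"
  then have "c (mk xs) \<noteq> 0" using assms lookup_toF[of c] by (auto simp: is_chain_def in_keys_iff)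
  then have "mk xs \<in> mk ` chs Ob RR n" using assms nerve_eq by (auto simp: is_chain_def)
  then show "xs \<in> chs Ob RR n" using inj_mk by (auto simp: mk_eq_iff)
qed

lemma ofF_toF:
  assumes "is_chain Ob Hom n c"
  shows "ofF (toF c) = c"
proof
  fix s
  show "ofF (toF c) s = c s"
  proof (cases "s = mk (fst s)")
    case True
    then show ?thesis using assms lookup_toF[of c] by (simp add: ofF_def is_chain_def)
  next
    case False
    have "c s = 0"
    proof (rule ccontr)
      assume "c s \<noteq> 0"
      then have "s \<in> mk ` chs Ob RR n" using assms nerve_eq by (auto simp: is_chain_def)
      then show False using False by auto
    qed
    then show ?thesis using False by (simp add: ofF_def)
  qed
qed

lemma is_chain_ofF:
  assumes "Poly_Mapping.keys z \<subseteq> chs Ob RR n"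
  shows "is_chain Ob Hom n (ofF z)"
  unfolding is_chain_def supp_ofF nerve_eq using assms by auto

lemma bdry_ofF:
  assumes z: "Poly_Mapping.keys z \<subseteq> chs Ob RR n" and n: "1 \<le> n"
  shows "bdry cmp n (ofF z) = ofF (Dn n z)"
proof
  fix t
  have "bdry cmp n (ofF z) t = (\<Sum>s\<in>mk ` Poly_Mapping.keys z. \<Sum>i\<le>n. if face cmp n i s = t then (-1)^i * ofF z s else 0)"
    unfolding bdry_def supp_ofF ..
  also have "\<dots> = (\<Sum>xs\<in>Poly_Mapping.keys z. \<Sum>i\<le>n. if face cmp n i (mk xs) = t then (-1)^i * ofF z (mk xs) else 0)"
    by (rule sum.reindex[unfolded o_def]) (meson inj_mk inj_on_subset subset_UNIV)
  also have "\<dots> = (\<Sum>xs\<in>Poly_Mapping.keys z. \<Sum>i\<le>n. if mk (del i xs) = t then (-1)^i * Poly_Mapping.lookup z xs else 0)"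
  proof (rule sum.cong[OF refl], rule sum.cong[OF refl])
    fix xs i assume "xs \<in> Poly_Mapping.keys z" "i \<in> {..n}"
    then have "face cmp n i (mk xs) = mk (del i xs)" using z n by (intro face_mk) auto
    then show "(if face cmp n i (mk xs) = t then (-1)^i * ofF z (mk xs) else 0)
      = (if mk (del i xs) = t then (-1)^i * Poly_Mapping.lookup z xs else 0)" by (simp add: ofF_mk)
  qed
  also have "\<dots> = ofF (Dn n z) t"
  proof (cases "t = mk (fst t)")
    case True
    have "ofF (Dn n z) t = (\<Sum>xs\<in>Poly_Mapping.keys z. Poly_Mapping.lookup z xs * (\<Sum>i\<le>n. if del i xs = fst t then (-1)^i else 0))"
      using True by (simp add: ofF_def lookup_Dn lookup_bd)
    also have "\<dots> = (\<Sum>xs\<in>Poly_Mapping.keys z. \<Sum>i\<le>n. if mk (del i xs) = t then (-1)^i * Poly_Mapping.lookup z xs else 0)"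
    proof (rule sum.cong[OF refl])
      fix xs
      have "mk (del i xs) = t \<longleftrightarrow> del i xs = fst t" for i
        using True mk_eq_iff by metis
      then show "Poly_Mapping.lookup z xs * (\<Sum>i\<le>n. if del i xs = fst t then (-1)^i else 0)
          = (\<Sum>i\<le>n. if mk (del i xs) = t then (-1)^i * Poly_Mapping.lookup z xs else 0)"
        by (simp add: sum_distrib_left if_distrib mult.commute cong: if_cong)
    qed
    finally show ?thesis by simp
  next
    case False
    have "mk (del i xs) \<noteq> t" for i xs
      using False by (metis fst_mk)
    then show ?thesis using False by (simp add: ofF_def)
  qed
  finally show "bdry cmp n (ofF z) t = ofF (Dn n z) t" .
qed

lemma aug_toF:
  assumes "is_chain Ob Hom 0 c"
  shows "aug (toF c) = (\<Sum>s\<in>{s. c s \<noteq> 0}. c s)"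
proof -
  have fin: "finite {s. c s \<noteq> 0}" using assms by (simp add: is_chain_def)
  have "{s. c s \<noteq> 0} = {s. ofF (toF c) s \<noteq> 0}" using ofF_toF[OF assms] by simp
  also have "\<dots> = mk ` Poly_Mapping.keys (toF c)" by (rule supp_ofF)
  finally have e: "{s. c s \<noteq> 0} = mk ` Poly_Mapping.keys (toF c)" .
  have "(\<Sum>s\<in>{s. c s \<noteq> 0}. c s) = (\<Sum>xs\<in>Poly_Mapping.keys (toF c). c (mk xs))"
    unfolding e by (rule sum.reindex[unfolded o_def]) (meson inj_mk inj_on_subset subset_UNIV)
  also have "\<dots> = aug (toF c)" unfolding aug_def using lookup_toF[OF fin] by simp
  finally show ?thesis by simp
qed

theorem transfer_acyclic:
  assumes ne: "Ob \<noteq> {}"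
    and A0: "\<And>z. Poly_Mapping.keys z \<subseteq> chs Ob RR 0 \<Longrightarrow> aug z = 0 \<Longrightarrow> \<exists>b. Poly_Mapping.keys b \<subseteq> chs Ob RR 1 \<and> Dn 1 b = z"
    and An: "\<And>n z. 1 \<le> n \<Longrightarrow> Poly_Mapping.keys z \<subseteq> chs Ob RR n \<Longrightarrow> Dn n z = 0 \<Longrightarrow>
           \<exists>b. Poly_Mapping.keys b \<subseteq> chs Ob RR (Suc n) \<and> Dn (Suc n) b = z"
  shows "connected_acyclic Ob Hom cmp"
  unfolding connected_acyclic_def
proof (intro conjI allI impI)
  show "Ob \<noteq> {}" by (rule ne)
next
  fix c assume h: "is_chain Ob Hom 0 c \<and> (\<Sum>s\<in>{s. c s \<noteq> 0}. c s) = 0"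
  then have ch: "is_chain Ob Hom 0 c" by simp
  have "aug (toF c) = 0" using h aug_toF[OF ch] by simp
  then obtain b where b: "Poly_Mapping.keys b \<subseteq> chs Ob RR 1" "Dn 1 b = toF c"
    using A0 keys_toF[OF ch] by blast
  have "bdry cmp 1 (ofF b) = c"
    using bdry_ofF[OF b(1)] b(2) ofF_toF[OF ch] by simp
  then show "\<exists>b. is_chain Ob Hom 1 b \<and> bdry cmp 1 b = c"
    using is_chain_ofF[OF b(1)] by blast
next
  fix n :: nat and c
  assume n: "1 \<le> n" and h: "is_chain Ob Hom n c \<and> bdry cmp n c = (\<lambda>_. 0)"
  then have ch: "is_chain Ob Hom n c" by simp
  have "ofF (Dn n (toF c)) = (\<lambda>_. 0)"
    using h bdry_ofF[OF keys_toF[OF ch] n] ofF_toF[OF ch] by simp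
  then have "Dn n (toF c) = 0" by (rule ofF_zero_imp)
  then obtain b where b: "Poly_Mapping.keys b \<subseteq> chs Ob RR (Suc n)" "Dn (Suc n) b = toF c"
    using An[OF n keys_toF[OF ch]] by blast
  have "bdry cmp (Suc n) (ofF b) = c"
    using bdry_ofF[OF b(1)] b(2) ofF_toF[OF ch] by simp
  then show "\<exists>b. is_chain Ob Hom (Suc n) b \<and> bdry cmp (Suc n) b = c"
    using is_chain_ofF[OF b(1)] by blast
qed

end

end

definition cnt :: "'a list \<Rightarrow> 'a \<Rightarrow> nat" where
  "cnt xs a = length (filter (\<lambda>x. x = a) xs)"

definition proj :: "'a \<Rightarrow> 'a \<Rightarrow> 'a list \<Rightarrow> 'a list" where
  "proj a b xs = filter (\<lambda>x. x = a \<or> x = b) xs"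

lemma cnt_append[simp]: "cnt (xs @ ys) a = cnt xs a + cnt ys a"
  by (simp add: cnt_def)
lemma cnt_Nil[simp]: "cnt [] a = 0" by (simp add: cnt_def)
lemma cnt_Cons: "cnt (x # xs) a = (if x = a then Suc (cnt xs a) else cnt xs a)"
  by (simp add: cnt_def)
lemma proj_append[simp]: "proj a b (xs @ ys) = proj a b xs @ proj a b ys"
  by (simp add: proj_def)
lemma proj_Cons: "proj a b (x # xs) = (if x = a \<or> x = b then x # proj a b xs else proj a b xs)"
  by (simp add: proj_def)
lemma proj_Nil[simp]: "proj a b [] = []" by (simp add: proj_def)

lemma cnt_pos: "0 < cnt xs a \<longleftrightarrow> a \<in> set xs"
  by (induction xs) (auto simp: cnt_Cons)

lemma cnt_proj: "cnt xs a = length (proj a a xs)"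
  by (simp add: cnt_def proj_def)

context
  fixes I :: "('a \<times> 'a) set"
  assumes irr: "irrefl I" and sym: "sym I"
begin

lemma notI_refl: "(a, a) \<notin> I"
  using irr by (simp add: irrefl_def)

lemma I_sym: "(a, b) \<in> I \<Longrightarrow> (b, a) \<in> I"
  using sym by (simp add: sym_def)

lemma swap_step_proj:
  assumes "swap_step I u v" "(a, b) \<notin> I"
  shows "proj a b u = proj a b v"
  using assms(1)
proof cases
  case (1 c d p s)
  have "proj a b [c, d] = proj a b [d, c]"
  proof -
    have "c \<noteq> d" using 1 notI_refl by auto
    have "\<not> ((c = a \<or> c = b) \<and> (d = a \<or> d = b))"
    proof
      assume h: "(c = a \<or> c = b) \<and> (d = a \<or> d = b)"
      then have "(c, d) = (a, b) \<or> (c, d) = (b, a)" using \<open>c \<noteq> d\<close> by auto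
      then show False using 1 assms(2) I_sym by auto
    qed
    then show ?thesis by (auto simp: proj_def)
  qed
  then show ?thesis using 1 proj_append[of a b "[c,d]" s] proj_append[of a b "[d,c]" s] by simp
qed

lemma teq_proj:
  assumes "teq I u v" "(a, b) \<notin> I"
  shows "proj a b u = proj a b v"
  using assms(1) unfolding teq_def
proof (induction rule: rtranclp_induct)
  case base show ?case by simp
next
  case (step y z)
  then show ?case using swap_step_proj[OF step.hyps(2) assms(2)] by simp
qed

lemma swap_step_sym: "swap_step I u v \<Longrightarrow> swap_step I v u"
  by (auto elim!: swap_step.cases intro: swap_step.intros I_sym)

lemma teq_refl: "teq I u u" by (simp add: teq_def)

lemma teq_sym: "teq I u v \<Longrightarrow> teq I v u"
  unfolding teq_def
  by (induction rule: rtranclp_induct)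
     (auto intro: converse_rtranclp_into_rtranclp swap_step_sym)

lemma teq_trans: "teq I u v \<Longrightarrow> teq I v x \<Longrightarrow> teq I u x"
  unfolding teq_def by simp

lemma swap_step_ctx: "swap_step I u v \<Longrightarrow> swap_step I (p @ u @ s) (p @ v @ s)"
proof (induction rule: swap_step.cases)
  case (1 a b u' v')
  then have "swap_step I ((p @ u') @ [a, b] @ (v' @ s)) ((p @ u') @ [b, a] @ (v' @ s))"
    by (intro swap_step.intros)
  then show ?case using 1 by simp
qed

lemma teq_ctx: "teq I u v \<Longrightarrow> teq I (p @ u @ s) (p @ v @ s)"
  unfolding teq_def
  by (induction rule: rtranclp_induct) (auto intro: rtranclp.rtrancl_into_rtrancl swap_step_ctx)

lemma teq_move:
  assumes "\<forall>y\<in>set ys. (x, y) \<in> I"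
  shows "teq I (ys @ x # zs) (x # ys @ zs)"
  using assms
proof (induction ys arbitrary: zs rule: rev_induct)
  case Nil then show ?case by (simp add: teq_refl)
next
  case (snoc y ys)
  then have h: "teq I (ys @ x # y # zs) (x # ys @ y # zs)" by simp
  have "(y, x) \<in> I" using snoc.prems I_sym by auto
  then have "swap_step I (ys @ [y, x] @ zs) (ys @ [x, y] @ zs)" by (rule swap_step.intros)
  then have "teq I (ys @ [y] @ x # zs) (ys @ x # y # zs)" unfolding teq_def by simp
  then show ?case using h by (simp add: teq_trans)
qed

lemma proj_eq_teq:
  assumes "\<forall>a b. (a, b) \<notin> I \<longrightarrow> proj a b u = proj a b v"
  shows "teq I u v"
  using assms
proof (induction u arbitrary: v)
  case Nil
  have "v = []"
  proof (rule ccontr)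
    assume "v \<noteq> []"
    then obtain y ys where "v = y # ys" by (cases v) auto
    then have "proj y y v \<noteq> []" by (simp add: proj_Cons)
    then show False using Nil notI_refl[of y] by auto
  qed
  then show ?case by (simp add: teq_refl)
next
  case (Cons x u)
  have "proj x x v = proj x x (x # u)" using Cons.prems notI_refl by metis
  then have "proj x x v \<noteq> []" by (simp add: proj_Cons)
  then have "x \<in> set v" by (auto simp: proj_def filter_empty_conv)
  then obtain v1 v2 where v: "v = v1 @ x # v2" and nx: "x \<notin> set v1" by (meson split_list_first)
  have com: "\<forall>y\<in>set v1. (x, y) \<in> I"
  proof
    fix y assume y: "y \<in> set v1"
    show "(x, y) \<in> I"
    proof (rule ccontr)
      assume dep: "(x, y) \<notin> I"
      have "proj x y (x # u) = proj x y v" using Cons.prems dep by blast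
      moreover have "hd (proj x y (x # u)) = x" by (simp add: proj_Cons)
      moreover have "proj x y v1 \<noteq> []" using y by (auto simp: proj_def filter_empty_conv)
      moreover have "set (proj x y v1) \<subseteq> {y}" using nx by (auto simp: proj_def)
      ultimately have "x = y" using v by (auto simp: hd_append dest!: hd_in_set)
      then show False using nx y by simp
    qed
  qed
  have t1: "teq I v (x # v1 @ v2)" using teq_move[OF com] v by simp
  have "\<forall>a b. (a, b) \<notin> I \<longrightarrow> proj a b u = proj a b (v1 @ v2)"
  proof (intro allI impI)
    fix a b assume ab: "(a, b) \<notin> I"
    have "proj a b (x # u) = proj a b (x # v1 @ v2)"
      using Cons.prems ab teq_proj[OF t1 ab] by simp
    then show "proj a b u = proj a b (v1 @ v2)" by (auto simp: proj_Cons split: if_splits)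
  qed
  then have "teq I u (v1 @ v2)" by (rule Cons.IH)
  then have "teq I ([x] @ u @ []) ([x] @ (v1 @ v2) @ [])" by (rule teq_ctx)
  then show ?case using teq_sym[OF t1] by (simp add: teq_trans)
qed

lemma teq_iff_proj: "teq I u v \<longleftrightarrow> (\<forall>a b. (a, b) \<notin> I \<longrightarrow> proj a b u = proj a b v)"
  using teq_proj proj_eq_teq by blast

lemma teq_cnt: "teq I u v \<Longrightarrow> cnt u a = cnt v a"
  using teq_proj[of u v a a] notI_refl by (simp add: cnt_proj)

lemma teq_set: "teq I u v \<Longrightarrow> set u = set v"
proof -
  assume h: "teq I u v"
  have "x \<in> set u \<longleftrightarrow> x \<in> set v" for x
    using teq_cnt[OF h, of x] cnt_pos[of u x] cnt_pos[of v x] by simp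
  then show ?thesis by blast
qed

lemma teq_cancel_left: "teq I (p @ u) (p @ v) \<Longrightarrow> teq I u v"
  by (simp add: teq_iff_proj)

lemma teq_cancel_right: "teq I (u @ s) (v @ s) \<Longrightarrow> teq I u v"
  by (simp add: teq_iff_proj)

lemma teq_append: "teq I u u' \<Longrightarrow> teq I v v' \<Longrightarrow> teq I (u @ v) (u' @ v')"
  by (simp add: teq_iff_proj)

lemma trace_eq_iff: "trace I u = trace I v \<longleftrightarrow> teq I u v"
proof
  assume "trace I u = trace I v"
  then have "v \<in> trace I u" by (simp add: trace_def teq_refl)
  then show "teq I u v" by (simp add: trace_def)
next
  assume h: "teq I u v"
  show "trace I u = trace I v"
    unfolding trace_def using h teq_sym teq_trans by blast
qed

lemma in_trace: "x \<in> trace I u \<longleftrightarrow> teq I u x" by (simp add: trace_def)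

lemma tmult_trace: "tmult I (trace I u) (trace I v) = trace I (u @ v)"
proof -
  have "trace I (u' @ v') = trace I (u @ v)" if "u' \<in> trace I u" "v' \<in> trace I v" for u' v'
    using that by (simp add: trace_eq_iff in_trace teq_append teq_sym)
  moreover have "u \<in> trace I u" "v \<in> trace I v" by (simp_all add: in_trace teq_refl)
  ultimately show ?thesis unfolding tmult_def by blast
qed

end

fun occf :: "('a \<Rightarrow> nat) \<Rightarrow> 'a list \<Rightarrow> ('a \<times> nat) list" where
  "occf c [] = []"
| "occf c (x # xs) = (x, c x) # occf (c(x := Suc (c x))) xs"

definition occ :: "'a list \<Rightarrow> ('a \<times> nat) list" where
  "occ w = occf (\<lambda>_. 0) w"

definition Pos :: "('a \<Rightarrow> nat) \<Rightarrow> ('a \<times> nat) set" where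
  "Pos \<kappa> = {q. snd q < \<kappa> (fst q)}"

lemma map_fst_occf[simp]: "map fst (occf c xs) = xs"
  by (induction xs arbitrary: c) auto

lemma length_occf[simp]: "length (occf c xs) = length xs"
  by (induction xs arbitrary: c) auto

lemma occf_append: "occf c (p @ s) = occf c p @ occf (\<lambda>a. c a + cnt p a) s"
proof (induction p arbitrary: c)
  case Nil then show ?case by simp
next
  case (Cons x p)
  have E: "(\<lambda>a. (c(x := Suc (c x))) a + cnt p a) = (\<lambda>a. c a + cnt (x # p) a)"
    by (auto simp: cnt_Cons)
  have "occf c ((x # p) @ s) = (x, c x) # occf (c(x := Suc (c x))) (p @ s)"
    by (simp only: append_Cons occf.simps)
  also have "\<dots> = (x, c x) # (occf (c(x := Suc (c x))) p @ occf (\<lambda>a. (c(x := Suc (c x))) a + cnt p a) s)"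
    by (simp only: Cons.IH)
  also have "\<dots> = occf c (x # p) @ occf (\<lambda>a. c a + cnt (x # p) a) s"
    by (simp only: E occf.simps append_Cons)
  finally show ?case .
qed

lemma set_occf: "q \<in> set (occf c xs) \<Longrightarrow> c (fst q) \<le> snd q \<and> snd q < c (fst q) + cnt xs (fst q)"
proof (induction xs arbitrary: c)
  case Nil then show ?case by simp
next
  case (Cons x xs)
  then show ?case by (fastforce simp: cnt_Cons split: if_splits)
qed

lemma occf_cong: "(\<forall>y\<in>set xs. c y = c' y) \<Longrightarrow> occf c xs = occf c' xs"
proof (induction xs arbitrary: c c')
  case Nil then show ?case by simp
next
  case (Cons x xs)
  then have "occf (c(x := Suc (c x))) xs = occf (c'(x := Suc (c' x))) xs" by (intro Cons.IH) auto
  then show ?case using Cons.prems by simp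
qed

lemma filter_occf: "filter (\<lambda>q. P (fst q)) (occf c xs) = occf c (filter P xs)"
proof (induction xs arbitrary: c)
  case Nil then show ?case by simp
next
  case (Cons x xs)
  show ?case
  proof (cases "P x")
    case True
    have "filter (\<lambda>q. P (fst q)) (occf c (x # xs)) = (x, c x) # filter (\<lambda>q. P (fst q)) (occf (c(x := Suc (c x))) xs)"
      using True by simp
    also have "\<dots> = (x, c x) # occf (c(x := Suc (c x))) (filter P xs)" by (simp only: Cons.IH)
    also have "\<dots> = occf c (filter P (x # xs))" using True by (simp only: occf.simps filter.simps if_True)
    finally show ?thesis .
  next
    case False
    have "filter (\<lambda>q. P (fst q)) (occf (c(x := Suc (c x))) xs) = occf (c(x := Suc (c x))) (filter P xs)"
      by (rule Cons.IH)
    also have "\<dots> = occf c (filter P xs)" using False by (intro occf_cong) auto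
    finally show ?thesis using False by simp
  qed
qed

lemma dclosed_split:
  assumes "\<forall>i j. i \<le> j \<longrightarrow> j < length Q \<longrightarrow> Q!j \<in> S \<longrightarrow> Q!i \<in> S"
  shows "\<exists>m \<le> length Q. \<forall>i<length Q. (Q!i \<in> S \<longleftrightarrow> i < m)"
proof (cases "\<exists>i<length Q. Q!i \<notin> S")
  case True
  define m where "m = (LEAST i. i < length Q \<and> Q!i \<notin> S)"
  have m: "m < length Q" "Q!m \<notin> S" using LeastI_ex[OF True] by (auto simp: m_def)
  have lt: "i < m \<Longrightarrow> Q!i \<in> S" for i
    using not_less_Least[of i "\<lambda>i. i < length Q \<and> Q!i \<notin> S"] m by (auto simp: m_def)
  show ?thesis
  proof (intro exI[of _ m] conjI allI impI)
    show "m \<le> length Q" using m by simp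
    fix i assume "i < length Q"
    show "Q!i \<in> S \<longleftrightarrow> i < m"
      using lt assms m \<open>i < length Q\<close> by (metis not_le)
  qed
next
  case False
  then show ?thesis by (intro exI[of _ "length Q"]) auto
qed

lemma filter_interval:
  assumes "\<forall>i<length Q. (P (Q!i) \<longleftrightarrow> lo \<le> i \<and> i < hi)" "lo \<le> hi" "hi \<le> length Q"
  shows "filter P Q = drop lo (take hi Q)"
proof -
  have Q: "Q = take lo Q @ drop lo (take hi Q) @ drop hi Q"
    using assms(2,3) by (metis append.assoc append_take_drop_id drop_take le_add_diff_inverse take_add)
  have "filter P (take lo Q) = []"
    using assms by (auto simp: filter_empty_conv in_set_conv_nth)
  moreover have "filter P (drop lo (take hi Q)) = drop lo (take hi Q)"
    using assms by (auto simp: filter_id_conv in_set_conv_nth)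
  moreover have "filter P (drop hi Q) = []"
    using assms by (auto simp: filter_empty_conv in_set_conv_nth)
  ultimately show ?thesis by (subst Q) simp
qed

lemma drop_take_split:
  assumes "lo \<le> mid" "mid \<le> hi" "hi \<le> length Q"
  shows "drop lo (take hi Q) = drop lo (take mid Q) @ drop mid (take hi Q)"
proof -
  have "take hi Q = take mid Q @ drop mid (take hi Q)"
    using assms by (metis append_take_drop_id min.absorb1 take_take)
  moreover have "length (take mid Q) = mid" using assms by simp
  ultimately show ?thesis using assms(1) by (metis drop_append diff_is_0_eq drop0)
qed

context
  fixes I :: "('a \<times> 'a) set" and w :: "'a list"
  assumes irr: "irrefl I" and sym: "sym I"
begin

definition sub :: "('a \<times> nat) set \<Rightarrow> 'a list" where
  "sub S = map fst (filter (\<lambda>q. q \<in> S) (occ w))"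

definition Qab :: "'a \<Rightarrow> 'a \<Rightarrow> ('a \<times> nat) list" where
  "Qab a b = filter (\<lambda>q. fst q = a \<or> fst q = b) (occ w)"

definition dclosed :: "('a \<times> nat) set \<Rightarrow> ('a \<times> nat) list \<Rightarrow> bool" where
  "dclosed S Q \<longleftrightarrow> (\<forall>i j. i \<le> j \<longrightarrow> j < length Q \<longrightarrow> Q!j \<in> S \<longrightarrow> Q!i \<in> S)"

definition ideal :: "('a \<times> nat) set \<Rightarrow> bool" where
  "ideal S \<longleftrightarrow> (\<forall>a b. (a, b) \<notin> I \<longrightarrow> dclosed S (Qab a b))"

lemma proj_sub: "proj a b (sub S) = map fst (filter (\<lambda>q. q \<in> S) (Qab a b))"
  unfolding proj_def sub_def Qab_def by (simp add: filter_map o_def conj_commute)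

lemma Qab_occ: "Qab a b = occ (proj a b w)"
  unfolding Qab_def occ_def proj_def using filter_occf[of "\<lambda>x. x = a \<or> x = b"] by simp

lemma sub_UNIV: "sub UNIV = w"
  by (simp add: sub_def occ_def)

lemma set_sub: "set (sub S) \<subseteq> set w"
  unfolding sub_def occ_def by (metis filter_is_subset image_mono list.set_map map_fst_occf)

lemma ideal_Int: "ideal A \<Longrightarrow> ideal B \<Longrightarrow> ideal (A \<inter> B)"
  by (auto simp: ideal_def dclosed_def)

lemma ideal_UNIV: "ideal UNIV" by (auto simp: ideal_def dclosed_def)
lemma ideal_empty: "ideal {}" by (auto simp: ideal_def dclosed_def)

lemma cnt_proj_eq: "x = a \<or> x = b \<Longrightarrow> cnt (proj a b u) x = cnt u x"
  unfolding cnt_def proj_def by (auto simp: filter_filter intro: arg_cong[where f=length] filter_cong)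

lemma occ_prefix_split:
  assumes "\<forall>x\<in>set pu \<union> set pr. \<kappa> x = cnt pu x"
  shows "filter (\<lambda>q. q \<in> Pos \<kappa>) (occf (\<lambda>_. 0) (pu @ pr)) = occf (\<lambda>_. 0) pu"
    and "filter (\<lambda>q. q \<notin> Pos \<kappa>) (occf (\<lambda>_. 0) (pu @ pr)) = occf (cnt pu) pr"
    and "\<forall>q\<in>set (occf (\<lambda>_. 0) pu). q \<in> Pos \<kappa>"
    and "\<forall>q\<in>set (occf (cnt pu) pr). q \<notin> Pos \<kappa>"
    and "occf (\<lambda>_. 0) (pu @ pr) = occf (\<lambda>_. 0) pu @ occf (cnt pu) pr"
proof -
  have A: "q \<in> Pos \<kappa>" if "q \<in> set (occf (\<lambda>_. 0) pu)" for q
  proof -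
    have "fst q \<in> set pu" using that by (metis map_fst_occf image_eqI list.set_map)
    then show ?thesis using set_occf[OF that] assms by (auto simp: Pos_def)
  qed
  have B: "q \<notin> Pos \<kappa>" if "q \<in> set (occf (cnt pu) pr)" for q
  proof -
    have "fst q \<in> set pr" using that by (metis map_fst_occf image_eqI list.set_map)
    then show ?thesis using set_occf[OF that] assms by (auto simp: Pos_def)
  qed
  show ap: "occf (\<lambda>_. 0) (pu @ pr) = occf (\<lambda>_. 0) pu @ occf (cnt pu) pr"
    using occf_append[of "\<lambda>_. 0" pu pr] by simp
  show "filter (\<lambda>q. q \<in> Pos \<kappa>) (occf (\<lambda>_. 0) (pu @ pr)) = occf (\<lambda>_. 0) pu"
    using A B unfolding ap by simp
  show "filter (\<lambda>q. q \<notin> Pos \<kappa>) (occf (\<lambda>_. 0) (pu @ pr)) = occf (cnt pu) pr"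
    using A B unfolding ap by simp
  show "\<forall>q\<in>set (occf (\<lambda>_. 0) pu). q \<in> Pos \<kappa>" using A by blast
  show "\<forall>q\<in>set (occf (cnt pu) pr). q \<notin> Pos \<kappa>" using B by blast
qed

lemma prefix_proj:
  assumes "teq I (u @ r) w" "(a, b) \<notin> I"
  shows "proj a b (sub (Pos (cnt u))) = proj a b u" "proj a b (sub (- Pos (cnt u))) = proj a b r"
proof -
  have pw: "proj a b w = proj a b u @ proj a b r"
    using teq_proj[OF irr sym assms] by simp
  have k: "\<forall>x\<in>set (proj a b u) \<union> set (proj a b r). cnt u x = cnt (proj a b u) x"
    using cnt_proj_eq[of _ a b u] by (auto simp: proj_def)
  have "proj a b (sub (Pos (cnt u))) = map fst (filter (\<lambda>q. q \<in> Pos (cnt u)) (occf (\<lambda>_. 0) (proj a b u @ proj a b r)))"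
    unfolding proj_sub Qab_occ pw occ_def ..
  also have "\<dots> = proj a b u" using occ_prefix_split(1)[OF k] by simp
  finally show "proj a b (sub (Pos (cnt u))) = proj a b u" .
  have "proj a b (sub (- Pos (cnt u))) = map fst (filter (\<lambda>q. q \<notin> Pos (cnt u)) (occf (\<lambda>_. 0) (proj a b u @ proj a b r)))"
    unfolding proj_sub Qab_occ pw occ_def by simp
  also have "\<dots> = proj a b r" using occ_prefix_split(2)[OF k] by simp
  finally show "proj a b (sub (- Pos (cnt u))) = proj a b r" .
qed

lemma prefix_sub:
  assumes "teq I (u @ r) w"
  shows "teq I (sub (Pos (cnt u))) u" "teq I (sub (- Pos (cnt u))) r"
  using prefix_proj[OF assms] by (auto simp: teq_iff_proj[OF irr sym])

lemma ideal_Pos: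
  assumes "teq I (u @ r) w"
  shows "ideal (Pos (cnt u))"
  unfolding ideal_def dclosed_def
proof (intro allI impI)
  fix a b i j assume ab: "(a, b) \<notin> I" and ij: "i \<le> j" "j < length (Qab a b)" and jin: "Qab a b ! j \<in> Pos (cnt u)"
  have pw: "proj a b w = proj a b u @ proj a b r"
    using teq_proj[OF irr sym assms ab] by simp
  have k: "\<forall>x\<in>set (proj a b u) \<union> set (proj a b r). cnt u x = cnt (proj a b u) x"
    using cnt_proj_eq[of _ a b u] by (auto simp: proj_def)
  define A where "A = occf (\<lambda>_. 0) (proj a b u)"
  define B where "B = occf (cnt (proj a b u)) (proj a b r)"
  have Q: "Qab a b = A @ B" unfolding A_def B_def Qab_occ pw occ_def by (rule occ_prefix_split(5)[OF k])
  have Ain: "\<forall>q\<in>set A. q \<in> Pos (cnt u)" "\<forall>q\<in>set B. q \<notin> Pos (cnt u)"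
    unfolding A_def B_def using occ_prefix_split(3,4)[OF k] by auto
  have "j < length A"
  proof (rule ccontr)
    assume "\<not> j < length A"
    then have "Qab a b ! j = B ! (j - length A)" "j - length A < length B" using ij Q by (auto simp: nth_append)
    then show False using Ain(2) jin by (metis nth_mem)
  qed
  then have "Qab a b ! i = A ! i" "i < length A" using ij Q by (auto simp: nth_append)
  then show "Qab a b ! i \<in> Pos (cnt u)" using Ain(1) by (metis nth_mem)
qed

lemma K5:
  assumes iA: "ideal A" and iB: "ideal B" and iC: "ideal C" and AB: "A \<subseteq> B" and BC: "B \<subseteq> C"
  shows "teq I (sub (C - A)) (sub (B - A) @ sub (C - B))"
  unfolding teq_iff_proj[OF irr sym]
proof (intro allI impI)
  fix a b assume ab: "(a, b) \<notin> I"
  define Q where "Q = Qab a b"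
  obtain mA where mA: "mA \<le> length Q" "\<forall>i<length Q. (Q!i \<in> A \<longleftrightarrow> i < mA)"
    using dclosed_split[of Q A] iA ab by (auto simp: ideal_def dclosed_def Q_def)
  obtain mB where mB: "mB \<le> length Q" "\<forall>i<length Q. (Q!i \<in> B \<longleftrightarrow> i < mB)"
    using dclosed_split[of Q B] iB ab by (auto simp: ideal_def dclosed_def Q_def)
  obtain mC where mC: "mC \<le> length Q" "\<forall>i<length Q. (Q!i \<in> C \<longleftrightarrow> i < mC)"
    using dclosed_split[of Q C] iC ab by (auto simp: ideal_def dclosed_def Q_def)
  have AB': "mA \<le> mB"
  proof (rule ccontr)
    assume "\<not> mA \<le> mB"
    then have "Q!mB \<in> A" "mB < length Q" using mA by auto
    then show False using mB AB by auto
  qed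
  have BC': "mB \<le> mC"
  proof (rule ccontr)
    assume "\<not> mB \<le> mC"
    then have "Q!mC \<in> B" "mC < length Q" using mB by auto
    then show False using mC BC by auto
  qed
  have f1: "filter (\<lambda>q. q \<in> C - A) Q = drop mA (take mC Q)"
    by (rule filter_interval) (use mA mC AB' BC' in auto)
  have f2: "filter (\<lambda>q. q \<in> B - A) Q = drop mA (take mB Q)"
    by (rule filter_interval) (use mA mB AB' in auto)
  have f3: "filter (\<lambda>q. q \<in> C - B) Q = drop mB (take mC Q)"
    by (rule filter_interval) (use mB mC BC' in auto)
  have "drop mA (take mC Q) = drop mA (take mB Q) @ drop mB (take mC Q)"
    by (rule drop_take_split) (use AB' BC' mC in auto)
  then show "proj a b (sub (C - A)) = proj a b (sub (B - A) @ sub (C - B))"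
    unfolding proj_append proj_sub Q_def[symmetric] f1 f2 f3 by simp
qed

end

lemma exists_maximal:
  assumes S0: "S0 \<subseteq> E" "commuting I S0"
  shows "\<exists>S. maximal_commuting E I S \<and> S0 \<subseteq> S"
proof -
  define A where "A = {T. T \<subseteq> E \<and> commuting I (S0 \<union> T)}"
  have "\<exists>M\<in>A. \<forall>X\<in>A. M \<subseteq> X \<longrightarrow> X = M"
  proof (rule subset_Zorn')
    fix C assume C: "subset.chain A C"
    then have CA: "C \<subseteq> A" and ch: "\<forall>X\<in>C. \<forall>Y\<in>C. X \<subseteq> Y \<or> Y \<subseteq> X"
      by (auto simp: subset_chain_def)
    have "\<Union>C \<subseteq> E" using CA by (auto simp: A_def)
    moreover have "commuting I (S0 \<union> \<Union>C)"
      unfolding commuting_def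
    proof (intro ballI impI)
      fix a b assume a: "a \<in> S0 \<union> \<Union>C" and b: "b \<in> S0 \<union> \<Union>C" and ab: "a \<noteq> b"
      have "\<exists>T\<in>A. a \<in> S0 \<union> T \<and> b \<in> S0 \<union> T"
      proof (cases "a \<in> S0")
        case True
        show ?thesis
        proof (cases "b \<in> S0")
          case True
          then show ?thesis using \<open>a \<in> S0\<close> S0 by (intro bexI[of _ "{}"]) (auto simp: A_def)
        next
          case False
          then obtain T where "T \<in> C" "b \<in> T" using b by auto
          then show ?thesis using \<open>a \<in> S0\<close> CA by blast
        qed
      next
        case False
        then obtain Ta where Ta: "Ta \<in> C" "a \<in> Ta" using a by auto
        show ?thesis
        proof (cases "b \<in> S0")
          case True
          then show ?thesis using Ta CA by blast
        next
          case False
          then obtain Tb where Tb: "Tb \<in> C" "b \<in> Tb" using b by auto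
          from ch Ta(1) Tb(1) have "Ta \<subseteq> Tb \<or> Tb \<subseteq> Ta" by blast
          then show ?thesis using Ta Tb CA by blast
        qed
      qed
      then show "(a, b) \<in> I" using ab by (auto simp: A_def commuting_def)
    qed
    ultimately show "\<Union>C \<in> A" by (simp add: A_def)
  qed
  then obtain M where M: "M \<in> A" "\<forall>X\<in>A. M \<subseteq> X \<longrightarrow> X = M" by blast
  have "S0 \<union> M \<in> A" using M(1) S0 by (auto simp: A_def)
  then have eq: "S0 \<union> M = M" using M(2) by blast
  have "maximal_commuting E I M"
    unfolding maximal_commuting_def
  proof (intro conjI allI impI)
    show "M \<subseteq> E" using M(1) by (simp add: A_def)
    show "commuting I M" using M(1) eq by (simp add: A_def)
    fix T assume T: "T \<subseteq> E \<and> commuting I T \<and> M \<subseteq> T"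
    then have "S0 \<union> T = T" using eq by blast
    then have "T \<in> A" using T by (simp add: A_def)
    then show "T = M" using M(2) T by blast
  qed
  then show ?thesis using eq by blast
qed

context
  fixes E :: "'a set" and I :: "('a \<times> 'a) set" and w :: "'a list"
  assumes IE: "I \<subseteq> E \<times> E" and irr: "irrefl I" and sym: "sym I" and wE: "w \<in> lists E"
begin

definition tc :: "'a list set \<Rightarrow> 'a \<Rightarrow> nat" where
  "tc t = cnt (SOME v. v \<in> t)"

lemma tc_trace: "tc (trace I v) = cnt v"
proof -
  have "(SOME v'. v' \<in> trace I v) \<in> trace I v"
    by (rule someI[of _ v]) (simp add: in_trace[OF irr sym] teq_refl[OF irr sym])
  then have "teq I v (SOME v'. v' \<in> trace I v)" by (simp add: in_trace[OF irr sym])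
  then show ?thesis unfolding tc_def using teq_cnt[OF irr sym] by auto
qed


definition Gx :: "'a list set \<times> 'a list set \<times> 'a list set \<Rightarrow> ('a \<times> nat) set" where
  "Gx x = Pos (tc (snd (snd x)))"

definition Hx :: "'a list set \<times> 'a list set \<times> 'a list set \<Rightarrow> ('a \<times> nat) set" where
  "Hx x = Pos (\<lambda>a. tc (snd (snd x)) a + tc (fst x) a)"

definition mkobj :: "('a \<times> nat) set \<times> ('a \<times> nat) set \<Rightarrow> 'a list set \<times> 'a list set \<times> 'a list set" where
  "mkobj GH = (trace I ((sub w) (snd GH - fst GH)), trace I ((sub w) (- snd GH)), trace I ((sub w) (fst GH)))"

definition comm :: "('a \<times> nat) set \<Rightarrow> bool" where
  "comm S \<longleftrightarrow> (\<forall>p\<in>S \<inter> (set (occ w)). \<forall>q\<in>S \<inter> (set (occ w)). fst p \<noteq> fst q \<longrightarrow> (fst p, fst q) \<in> I)"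

definition good :: "('a \<times> nat) set \<times> ('a \<times> nat) set \<Rightarrow> bool" where
  "good GH \<longleftrightarrow> ideal I w (fst GH) \<and> ideal I w (snd GH) \<and> fst GH \<subseteq> snd GH \<and> comm (snd GH - fst GH)"

lemma pcmon_trace: "t \<in> pcmon E I \<longleftrightarrow> (\<exists>v\<in>lists E. t = trace I v)"
  by (auto simp: pcmon_def)

lemma sub_lists: "(sub w) S \<in> lists E"
  using set_sub[OF irr sym, of w S] wE by auto

lemma fst_in_sub: "p \<in> S \<Longrightarrow> p \<in> (set (occ w)) \<Longrightarrow> fst p \<in> set ((sub w) S)"
  unfolding sub_def[OF irr sym] by auto

lemma set_sub_eq: "set ((sub w) S) = fst ` (S \<inter> (set (occ w)))"
  unfolding sub_def[OF irr sym] by auto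

lemma union_objs_iff: "c \<in> union_objs E I \<longleftrightarrow> (\<exists>v\<in>lists E. c = trace I v \<and> commuting I (set v))"
proof
  assume "c \<in> union_objs E I"
  then obtain v S where "c = trace I v" "maximal_commuting E I S" "v \<in> lists S"
    by (auto simp: union_objs_def)
  then show "\<exists>v\<in>lists E. c = trace I v \<and> commuting I (set v)"
    by (intro bexI[of _ v]) (auto simp: maximal_commuting_def commuting_def)
next
  assume "\<exists>v\<in>lists E. c = trace I v \<and> commuting I (set v)"
  then obtain v where v: "v \<in> lists E" "c = trace I v" "commuting I (set v)" by blast
  then obtain S where "maximal_commuting E I S" "set v \<subseteq> S"
    using exists_maximal[of "set v" E I] by auto
  then show "c \<in> union_objs E I" using v by (auto simp: union_objs_def)
qed

lemma obj_decomp: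
  assumes "x \<in> comma_objs E I (trace I w)"
  obtains gw cw fw where "gw \<in> lists E" "cw \<in> lists E" "fw \<in> lists E"
    "x = (trace I cw, trace I fw, trace I gw)" "teq I (gw @ cw @ fw) w" "commuting I (set cw)"
proof -
  obtain c f g where x: "x = (c, f, g)" by (cases x) auto
  have "c \<in> union_objs E I" "(f, g) \<in> fhom E I c (trace I w)" using assms x by (auto simp: comma_objs_def)
  then obtain cw where cw: "cw \<in> lists E" "c = trace I cw" "commuting I (set cw)"
    by (auto simp: union_objs_iff)
  obtain fw gw where fg: "fw \<in> lists E" "gw \<in> lists E" "f = trace I fw" "g = trace I gw"
    "tmult I (tmult I g c) f = (trace I w)"
    using \<open>(f, g) \<in> fhom E I c (trace I w)\<close> by (auto simp: fhom_def pcmon_def)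
  have "trace I (gw @ cw @ fw) = (trace I w)" using fg cw by (simp add: tmult_trace[OF irr sym])
  then have "teq I (gw @ cw @ fw) w" by (simp add: trace_eq_iff[OF irr sym])
  then show ?thesis using that cw fg x by blast
qed

lemma K5': "ideal I w A \<Longrightarrow> ideal I w B \<Longrightarrow> ideal I w C \<Longrightarrow> A \<subseteq> B \<Longrightarrow> B \<subseteq> C \<Longrightarrow>
  trace I ((sub w) (C - A)) = trace I ((sub w) (B - A) @ (sub w) (C - B))"
  using K5[OF irr sym] by (simp add: trace_eq_iff[OF irr sym])

lemma obj_good:
  assumes x: "x \<in> comma_objs E I (trace I w)"
  shows "good (Gx x, Hx x)" "mkobj (Gx x, Hx x) = x"
proof -
  obtain gw cw fw where l: "gw \<in> lists E" "cw \<in> lists E" "fw \<in> lists E"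
    and x': "x = (trace I cw, trace I fw, trace I gw)" and t: "teq I (gw @ cw @ fw) w"
    and cm: "commuting I (set cw)"
    using obj_decomp[OF x] by blast
  have G: "Gx x = Pos (cnt gw)" using x' by (simp add: Gx_def tc_trace)
  have "(\<lambda>a. cnt gw a + cnt cw a) = cnt (gw @ cw)" by auto
  then have H: "Hx x = Pos (cnt (gw @ cw))" using x' by (simp add: Hx_def tc_trace)
  have t2: "teq I ((gw @ cw) @ fw) w" using t by simp
  have iG: "ideal I w (Gx x)" unfolding G by (rule ideal_Pos[OF irr sym t])
  have iH: "ideal I w (Hx x)" unfolding H by (rule ideal_Pos[OF irr sym t2])
  have GH: "Gx x \<subseteq> Hx x" unfolding G H by (auto simp: Pos_def)
  have sG: "teq I ((sub w) (Gx x)) gw" unfolding G by (rule prefix_sub(1)[OF irr sym t])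
  have sH: "teq I ((sub w) (Hx x)) (gw @ cw)" unfolding H by (rule prefix_sub(1)[OF irr sym t2])
  have sF: "teq I ((sub w) (- Hx x)) fw" unfolding H by (rule prefix_sub(2)[OF irr sym t2])
  have "trace I ((sub w) (Hx x - {})) = trace I ((sub w) (Gx x - {}) @ (sub w) (Hx x - Gx x))"
    by (rule K5'[OF ideal_empty[OF irr sym] iG iH]) (use GH in auto)
  then have "teq I ((sub w) (Hx x)) ((sub w) (Gx x) @ (sub w) (Hx x - Gx x))" by (simp add: trace_eq_iff[OF irr sym])
  then have "teq I (gw @ cw) (gw @ (sub w) (Hx x - Gx x))"
    using sH sG by (meson teq_append[OF irr sym] teq_refl[OF irr sym] teq_sym[OF irr sym] teq_trans[OF irr sym])
  then have sC: "teq I ((sub w) (Hx x - Gx x)) cw"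
    using teq_cancel_left[OF irr sym] teq_sym[OF irr sym] by blast
  have "comm (Hx x - Gx x)"
    unfolding comm_def
  proof (intro ballI impI)
    fix p q assume p: "p \<in> (Hx x - Gx x) \<inter> (set (occ w))" and q: "q \<in> (Hx x - Gx x) \<inter> (set (occ w))" and ne: "fst p \<noteq> fst q"
    have "fst p \<in> set cw" "fst q \<in> set cw"
      using fst_in_sub[of p] fst_in_sub[of q] p q teq_set[OF irr sym sC] by auto
    then show "(fst p, fst q) \<in> I" using cm ne by (auto simp: commuting_def)
  qed
  then show "good (Gx x, Hx x)" using iG iH GH by (simp add: good_def)
  show "mkobj (Gx x, Hx x) = x"
    using sG sF sC x' by (simp add: mkobj_def trace_eq_iff[OF irr sym])
qed

lemma good_obj:
  assumes g: "good GH"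
  shows "mkobj GH \<in> comma_objs E I (trace I w)"
proof -
  obtain G H where GH: "GH = (G, H)" by (cases GH)
  have iG: "ideal I w G" and iH: "ideal I w H" and sub: "G \<subseteq> H" and cm: "comm (H - G)"
    using g GH by (auto simp: good_def)
  have "commuting I (set ((sub w) (H - G)))"
    using cm unfolding commuting_def comm_def set_sub_eq by auto
  then have c: "trace I ((sub w) (H - G)) \<in> union_objs E I"
    using sub_lists by (auto simp: union_objs_iff)
  have "trace I ((sub w) (UNIV - {})) = trace I ((sub w) (G - {}) @ (sub w) (UNIV - G))"
    by (rule K5'[OF ideal_empty[OF irr sym] iG ideal_UNIV[OF irr sym]]) auto
  moreover have "trace I ((sub w) (UNIV - G)) = trace I ((sub w) (H - G) @ (sub w) (UNIV - H))"
    by (rule K5'[OF iG iH ideal_UNIV[OF irr sym] sub]) auto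
  ultimately have "trace I w = trace I ((sub w) G @ (sub w) (H - G) @ (sub w) (- H))"
    by (simp add: sub_UNIV[OF irr sym] trace_eq_iff[OF irr sym] Compl_eq_Diff_UNIV)
       (meson teq_append[OF irr sym] teq_refl[OF irr sym] teq_trans[OF irr sym])
  then have "tmult I (tmult I (trace I ((sub w) G)) (trace I ((sub w) (H - G)))) (trace I ((sub w) (- H))) = (trace I w)"
    by (simp add: tmult_trace[OF irr sym])
  then show ?thesis using c GH sub_lists
    by (auto simp: mkobj_def comma_objs_def fhom_def pcmon_def)
qed

end

context
  fixes E :: "'a set" and I :: "('a \<times> 'a) set" and w :: "'a list"
  assumes IE: "I \<subseteq> E \<times> E" and irr: "irrefl I" and sym: "sym I" and wE: "w \<in> lists E"
begin

abbreviation ObW where "ObW \<equiv> comma_objs E I (trace I w)"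
abbreviation HHW where "HHW \<equiv> comma_hom E I"

lemmas K5'' = K5'[OF IE irr sym wE]
lemmas tiff = trace_eq_iff[OF irr sym]
lemmas piff = teq_iff_proj[OF irr sym]
lemmas tmt = tmult_trace[OF irr sym]

lemma pcmonE: "t \<in> pcmon E I \<Longrightarrow> (\<And>v. v \<in> lists E \<Longrightarrow> t = trace I v \<Longrightarrow> P) \<Longrightarrow> P"
  by (auto simp: pcmon_def)

lemma trace_eq_proj: "trace I u = trace I v \<Longrightarrow> (a, b) \<notin> I \<Longrightarrow> proj a b u = proj a b v"
  using tiff piff by blast

lemma trace_app_cong: "trace I u = trace I u' \<Longrightarrow> trace I v = trace I v' \<Longrightarrow> trace I (u @ v) = trace I (u' @ v')"
  using teq_append[OF irr sym] by (simp add: tiff)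

lemma hom_of_good:
  assumes g1: "good I w (G1, H1)" and g2: "good I w (G2, H2)" and GG: "G2 \<subseteq> G1" and HHW': "H1 \<subseteq> H2"
  shows "HHW (mkobj I w (G1, H1)) (mkobj I w (G2, H2)) \<noteq> {}"
proof -
  have iG1: "ideal I w G1" and iH1: "ideal I w H1" and s1: "G1 \<subseteq> H1" using g1 by (auto simp: good_def[OF IE irr sym wE])
  have iG2: "ideal I w G2" and iH2: "ideal I w H2" and s2: "G2 \<subseteq> H2" using g2 by (auto simp: good_def[OF IE irr sym wE])
  define sb where "sb = sub w"
  have e1: "trace I (sb (H1 - G2)) = trace I (sb (G1 - G2) @ sb (H1 - G1))"
    unfolding sb_def by (rule K5''[OF iG2 iG1 iH1 GG s1])
  have e2: "trace I (sb (H2 - G2)) = trace I (sb (H1 - G2) @ sb (H2 - H1))"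
    unfolding sb_def by (rule K5''[OF iG2 iH1 iH2 _ HHW']) (use GG s1 in auto)
  have e3: "trace I (sb (UNIV - H1)) = trace I (sb (H2 - H1) @ sb (UNIV - H2))"
    unfolding sb_def by (rule K5''[OF iH1 iH2 ideal_UNIV[OF irr sym] HHW']) auto
  have e4: "trace I (sb (G1 - {})) = trace I (sb (G2 - {}) @ sb (G1 - G2))"
    unfolding sb_def by (rule K5''[OF ideal_empty[OF irr sym] iG2 iG1 _ GG]) auto
  have l: "sb S \<in> lists E" for S unfolding sb_def by (rule sub_lists[OF IE irr sym wE])
  define h where "h = (trace I (sb (H2 - H1)), trace I (sb (G1 - G2)))"
  have "h \<in> HHW (mkobj I w (G1, H1)) (mkobj I w (G2, H2))"
  proof -
    have "tmult I (tmult I (trace I (sb (G1 - G2))) (trace I (sb (H1 - G1)))) (trace I (sb (H2 - H1)))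
       = trace I (sb (H2 - G2))"
    proof -
      have "trace I ((sb (G1 - G2) @ sb (H1 - G1)) @ sb (H2 - H1)) = trace I (sb (H1 - G2) @ sb (H2 - H1))"
        by (rule trace_app_cong) (use e1 in auto)
      then show ?thesis unfolding tmt e2 by simp
    qed
    moreover have "tmult I (trace I (sb (H2 - H1))) (trace I (sb (- H2))) = trace I (sb (- H1))"
      unfolding tmt using e3 by (simp add: Compl_eq_Diff_UNIV)
    moreover have "tmult I (trace I (sb G2)) (trace I (sb (G1 - G2))) = trace I (sb G1)"
      unfolding tmt using e4 by simp
    ultimately show ?thesis using l
      by (auto simp: comma_hom_def fhom_def fcomp_def h_def mkobj_def[OF IE irr sym wE] sb_def pcmon_def)
  qed
  then show ?thesis by blast
qed

lemma hom_words:
  assumes h: "h \<in> HHW x y" and x': "x = (trace I cx, trace I fx, trace I gx)" and y': "y = (trace I cy, trace I fy, trace I gy)"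
  obtains p q where "h = (trace I p, trace I q)" "p \<in> lists E" "q \<in> lists E"
    "trace I (q @ cx @ p) = trace I cy" "trace I (p @ fy) = trace I fx" "trace I (gy @ q) = trace I gx"
proof -
  obtain ph ga where hh: "h = (ph, ga)" by (cases h)
  have hf: "(ph, ga) \<in> fhom E I (fst x) (fst y)" and hc: "fcomp I (snd y) (ph, ga) = snd x"
    using h hh by (auto simp: comma_hom_def)
  then have "ph \<in> pcmon E I" "ga \<in> pcmon E I" by (auto simp: fhom_def)
  then obtain p q where pq: "ph = trace I p" "ga = trace I q" "p \<in> lists E" "q \<in> lists E" by (auto simp: pcmon_def)
  have "tmult I (tmult I ga (fst x)) ph = fst y" using hf by (simp add: fhom_def)
  then have "trace I (q @ cx @ p) = trace I cy" using pq x' y' by (simp add: tmt)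
  moreover have "trace I (p @ fy) = trace I fx" "trace I (gy @ q) = trace I gx"
    using hc pq x' y' by (simp_all add: fcomp_def tmt)
  ultimately show ?thesis using that hh pq by blast
qed

lemma Pos_mono: "(\<And>a. k a \<le> k' a) \<Longrightarrow> Pos k \<subseteq> Pos k'"
  by (auto simp: Pos_def intro: less_le_trans)

lemma hom_contain:
  assumes x: "x \<in> ObW" and y: "y \<in> ObW" and h: "h \<in> HHW x y"
  shows "Gx y \<subseteq> Gx x" "Hx x \<subseteq> Hx y"
proof -
  obtain gx cx fx where lx: "gx \<in> lists E" "cx \<in> lists E" "fx \<in> lists E"
    and x': "x = (trace I cx, trace I fx, trace I gx)" and tx: "teq I (gx @ cx @ fx) w" and "commuting I (set cx)"
    by (rule obj_decomp[OF IE irr sym wE x])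
  obtain gy cy fy where ly: "gy \<in> lists E" "cy \<in> lists E" "fy \<in> lists E"
    and y': "y = (trace I cy, trace I fy, trace I gy)" and ty: "teq I (gy @ cy @ fy) w" and "commuting I (set cy)"
    by (rule obj_decomp[OF IE irr sym wE y])
  obtain p q where "h = (trace I p, trace I q)" "p \<in> lists E" "q \<in> lists E"
    "trace I (q @ cx @ p) = trace I cy" and c1': "trace I (p @ fy) = trace I fx" and c2': "trace I (gy @ q) = trace I gx"
    by (rule hom_words[OF h x' y'])
  then have c1: "tmult I (trace I p) (trace I fy) = trace I fx" and c2: "tmult I (trace I gy) (trace I q) = trace I gx"
    by (simp_all add: tmt)
  have "teq I (p @ fy) fx" "teq I (gy @ q) gx" using c1 c2 by (simp_all add: tmt tiff)
  then have cf: "cnt fx a = cnt p a + cnt fy a" and cg: "cnt gx a = cnt gy a + cnt q a" for a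
    using teq_cnt[OF irr sym] by (metis cnt_append)+
  have cwx: "cnt w a = cnt gx a + cnt cx a + cnt fx a" for a
    using teq_cnt[OF irr sym tx, of a] by simp
  have cwy: "cnt w a = cnt gy a + cnt cy a + cnt fy a" for a
    using teq_cnt[OF irr sym ty, of a] by simp
  show "Gx y \<subseteq> Gx x"
    using x' y' cg by (simp add: Gx_def[OF IE irr sym wE] tc_trace[OF IE irr sym wE] Pos_mono)
  have "cnt gx a + cnt cx a \<le> cnt gy a + cnt cy a" for a
    using cwx[of a] cwy[of a] cf[of a] by linarith
  then show "Hx x \<subseteq> Hx y"
    using x' y' by (simp add: Hx_def[OF IE irr sym wE] tc_trace[OF IE irr sym wE] Pos_mono)
qed

lemma thin:
  assumes x: "x \<in> ObW" and y: "y \<in> ObW" and h1: "h1 \<in> HHW x y" and h2: "h2 \<in> HHW x y"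
  shows "h1 = h2"
proof -
  obtain gy cy fy where "gy \<in> lists E" "cy \<in> lists E" "fy \<in> lists E"
    and y': "y = (trace I cy, trace I fy, trace I gy)" and "teq I (gy @ cy @ fy) w" and "commuting I (set cy)"
    by (rule obj_decomp[OF IE irr sym wE y])
  obtain ph1 ga1 where hh1: "h1 = (ph1, ga1)" by (cases h1)
  obtain ph2 ga2 where hh2: "h2 = (ph2, ga2)" by (cases h2)
  have "ph1 \<in> pcmon E I" "ga1 \<in> pcmon E I" and e1: "fcomp I (snd y) (ph1, ga1) = snd x"
    using h1 hh1 by (auto simp: comma_hom_def fhom_def)
  then obtain p1 q1 where pq1: "ph1 = trace I p1" "ga1 = trace I q1" by (auto simp: pcmon_def)
  have "ph2 \<in> pcmon E I" "ga2 \<in> pcmon E I" and e2: "fcomp I (snd y) (ph2, ga2) = snd x"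
    using h2 hh2 by (auto simp: comma_hom_def fhom_def)
  then obtain p2 q2 where pq2: "ph2 = trace I p2" "ga2 = trace I q2" by (auto simp: pcmon_def)
  have "fcomp I (snd y) (ph1, ga1) = fcomp I (snd y) (ph2, ga2)" using e1 e2 by simp
  then have "trace I (p1 @ fy) = trace I (p2 @ fy)" "trace I (gy @ q1) = trace I (gy @ q2)"
    using pq1 pq2 y' by (simp_all add: fcomp_def tmt)
  then have t: "teq I (p1 @ fy) (p2 @ fy)" "teq I (gy @ q1) (gy @ q2)" by (simp_all only: tiff)
  have "teq I p1 p2" by (rule teq_cancel_right[OF irr sym t(1)])
  moreover have "teq I q1 q2" by (rule teq_cancel_left[OF irr sym t(2)])
  ultimately have "teq I p1 p2" "teq I q1 q2" by auto
  then show ?thesis using hh1 hh2 pq1 pq2 by (simp add: tiff)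
qed

lemma clos:
  assumes x: "x \<in> ObW" and y: "y \<in> ObW" and z: "z \<in> ObW" and h1: "h1 \<in> HHW x y" and h2: "h2 \<in> HHW y z"
  shows "fcomp I h2 h1 \<in> HHW x z"
proof -
  obtain gx cx fx where "gx \<in> lists E" "cx \<in> lists E" "fx \<in> lists E"
    and x': "x = (trace I cx, trace I fx, trace I gx)" and "teq I (gx @ cx @ fx) w" and "commuting I (set cx)"
    by (rule obj_decomp[OF IE irr sym wE x])
  obtain gy cy fy where "gy \<in> lists E" "cy \<in> lists E" "fy \<in> lists E"
    and y': "y = (trace I cy, trace I fy, trace I gy)" and "teq I (gy @ cy @ fy) w" and "commuting I (set cy)"
    by (rule obj_decomp[OF IE irr sym wE y])
  obtain gz cz fz where "gz \<in> lists E" "cz \<in> lists E" "fz \<in> lists E"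
    and z': "z = (trace I cz, trace I fz, trace I gz)" and "teq I (gz @ cz @ fz) w" and "commuting I (set cz)"
    by (rule obj_decomp[OF IE irr sym wE z])
  obtain p1 q1 where h1': "h1 = (trace I p1, trace I q1)" "p1 \<in> lists E" "q1 \<in> lists E"
    and a1: "trace I (q1 @ cx @ p1) = trace I cy" "trace I (p1 @ fy) = trace I fx" "trace I (gy @ q1) = trace I gx"
    by (rule hom_words[OF h1 x' y'])
  obtain p2 q2 where h2': "h2 = (trace I p2, trace I q2)" "p2 \<in> lists E" "q2 \<in> lists E"
    and a2: "trace I (q2 @ cy @ p2) = trace I cz" "trace I (p2 @ fz) = trace I fy" "trace I (gz @ q2) = trace I gy"
    by (rule hom_words[OF h2 y' z'])
  have "trace I (q2 @ q1 @ cx @ p1 @ p2) = trace I cz"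
    unfolding tiff piff
  proof (intro allI impI)
    fix a b assume ab: "(a, b) \<notin> I"
    have r1: "proj a b cy = proj a b q1 @ proj a b cx @ proj a b p1" using trace_eq_proj[OF a1(1) ab] by simp
    have r2: "proj a b cz = proj a b q2 @ proj a b cy @ proj a b p2" using trace_eq_proj[OF a2(1) ab] by simp
    show "proj a b (q2 @ q1 @ cx @ p1 @ p2) = proj a b cz" by (simp add: r1 r2)
  qed
  moreover have "trace I (p1 @ p2 @ fz) = trace I fx"
    unfolding tiff piff
  proof (intro allI impI)
    fix a b assume ab: "(a, b) \<notin> I"
    have r1: "proj a b fx = proj a b p1 @ proj a b fy" using trace_eq_proj[OF a1(2) ab] by simp
    have r2: "proj a b fy = proj a b p2 @ proj a b fz" using trace_eq_proj[OF a2(2) ab] by simp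
    show "proj a b (p1 @ p2 @ fz) = proj a b fx" by (simp add: r1 r2)
  qed
  moreover have "trace I (gz @ q2 @ q1) = trace I gx"
    unfolding tiff piff
  proof (intro allI impI)
    fix a b assume ab: "(a, b) \<notin> I"
    have r1: "proj a b gx = proj a b gy @ proj a b q1" using trace_eq_proj[OF a1(3) ab] by simp
    have r2: "proj a b gy = proj a b gz @ proj a b q2" using trace_eq_proj[OF a2(3) ab] by simp
    show "proj a b (gz @ q2 @ q1) = proj a b gx" by (simp add: r1 r2)
  qed
  ultimately show ?thesis using h1' h2' x' z'
    by (auto simp: comma_hom_def fhom_def fcomp_def pcmon_def tmt)
qed

end

lemma take_occf: "take j (occf c xs) = occf c (take j xs)"
  by (induction xs arbitrary: j c) (auto simp: take_Cons split: nat.split)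

context
  fixes E :: "'a set" and I :: "('a \<times> 'a) set" and w :: "'a list"
  assumes IE: "I \<subseteq> E \<times> E" and irr: "irrefl I" and sym: "sym I" and wE: "w \<in> lists E"
begin

definition PP :: "nat \<Rightarrow> ('a \<times> nat) set" where
  "PP j = Pos (cnt (take j w))"

definition Th :: "nat \<Rightarrow> ('a \<times> nat) set \<times> ('a \<times> nat) set \<Rightarrow> ('a \<times> nat) set \<times> ('a \<times> nat) set" where
  "Th t GH = (fst GH \<inter> PP (t div 2), snd GH \<inter> PP (Suc t div 2))"

lemma PP_ideal: "ideal I w (PP j)"
  unfolding PP_def by (rule ideal_Pos[OF irr sym, of "take j w" "drop j w"]) (simp add: teq_refl[OF irr sym])

lemma PP_mono: "j \<le> j' \<Longrightarrow> PP j \<subseteq> PP j'"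
proof -
  assume "j \<le> j'"
  then have "take j' w = take j w @ take (j' - j) (drop j w)" by (metis le_add_diff_inverse take_add)
  then have "cnt (take j w) a \<le> cnt (take j' w) a" for a by (metis cnt_append le_add1)
  then show ?thesis unfolding PP_def by (rule Pos_mono[OF IE irr sym wE])
qed

lemma PP_Om: "PP j \<inter> set (occ w) = set (take j (occ w))"
proof -
  have k: "\<forall>x\<in>set (take j w) \<union> set (drop j w). cnt (take j w) x = cnt (take j w) x" by simp
  have o: "occ w = occf (\<lambda>_. 0) (take j w) @ occf (cnt (take j w)) (drop j w)"
    unfolding occ_def using occ_prefix_split(5)[OF irr sym k] by simp
  have t: "take j (occ w) = occf (\<lambda>_. 0) (take j w)" by (simp add: occ_def take_occf)
  show ?thesis
    using occ_prefix_split(3,4)[OF irr sym k] unfolding PP_def t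
    by (subst o) auto
qed

lemma PP_full: "set (occ w) \<subseteq> PP (length w)"
proof -
  have "PP (length w) \<inter> set (occ w) = set (occ w)" using PP_Om[of "length w"] by (simp add: occ_def)
  then show ?thesis by blast
qed

lemma PP_0: "PP 0 = {}" by (simp add: PP_def Pos_def)

lemma aux_dep:
  assumes iG: "ideal I w G" and j: "j < length (occ w)" and eG: "occ w ! j \<in> G"
    and p: "p \<in> set (take j (occ w))" and pG: "p \<notin> G" and ne: "fst p \<noteq> fst (occ w ! j)"
  shows "(fst p, fst (occ w ! j)) \<in> I"
proof (rule ccontr)
  assume dep: "(fst p, fst (occ w ! j)) \<notin> I"
  define a where "a = fst p"
  define b where "b = fst (occ w ! j)"
  define P where "P = (\<lambda>q::'a \<times> nat. fst q = a \<or> fst q = b)"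
  define A where "A = filter P (take j (occ w))"
  define B where "B = filter P (drop j (occ w))"
  have Q: "Qab w a b = A @ B"
    unfolding Qab_def[OF irr sym] A_def B_def P_def by (metis append_take_drop_id filter_append)
  have "p \<in> set A" using p by (simp add: A_def P_def a_def)
  then obtain i where i: "i < length A" "A ! i = p" by (auto simp: in_set_conv_nth)
  have "occ w ! j \<in> set (drop j (occ w))" using j by (metis Cons_nth_drop_Suc list.set_intros(1))
  then have "occ w ! j \<in> set B" by (simp add: B_def P_def b_def)
  then obtain t where t: "t < length B" "B ! t = occ w ! j" by (auto simp: in_set_conv_nth)
  have dc: "dclosed G (Qab w a b)" using iG dep by (simp add: ideal_def[OF irr sym] a_def b_def)
  have "Qab w a b ! (length A + t) \<in> G" using Q t eG by (simp add: nth_append)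
  moreover have "length A + t < length (Qab w a b)" using Q t by simp
  moreover have "i \<le> length A + t" using i by simp
  ultimately have "Qab w a b ! i \<in> G" using dc by (auto simp: dclosed_def[OF irr sym])
  then show False using Q i pG by (simp add: nth_append)
qed

lemma Th_good:
  assumes g: "good I w GH"
  shows "good I w (Th t GH)"
proof -
  obtain G H where GH: "GH = (G, H)" by (cases GH)
  have iG: "ideal I w G" and iH: "ideal I w H" and sub: "G \<subseteq> H" and cm: "comm I w (H - G)"
    using g GH by (auto simp: good_def[OF IE irr sym wE])
  define j where "j = t div 2"
  define j' where "j' = Suc t div 2"
  have jj: "j \<le> j'" "j' \<le> Suc j" by (auto simp: j_def j'_def)
  let ?L = "occ w"
  have new: "r \<in> H - G \<or> (r \<in> G \<and> j' = Suc j \<and> j < length ?L \<and> r = ?L ! j)"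
    if r: "r \<in> ((H \<inter> PP j') - (G \<inter> PP j)) \<inter> set ?L" for r
  proof (cases "r \<in> G")
    case False then show ?thesis using r by auto
  next
    case True
    have r1: "r \<in> set (take j' ?L)" using r PP_Om[of j'] by auto
    have r2: "r \<notin> set (take j ?L)" using r True PP_Om[of j] by auto
    have "j' \<noteq> j" using r1 r2 by auto
    then have j'': "j' = Suc j" using jj by simp
    have jl: "j < length ?L"
    proof (rule ccontr)
      assume "\<not> j < length ?L"
      then have "take j' ?L = take j ?L" using j'' by simp
      then show False using r1 r2 by simp
    qed
    then have "set (take j' ?L) = insert (?L ! j) (set (take j ?L))"
      using j'' by (simp add: take_Suc_conv_app_nth)
    then show ?thesis using r1 r2 True j'' jl by auto
  qed
  have cm': "comm I w ((H \<inter> PP j') - (G \<inter> PP j))"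
    unfolding comm_def[OF IE irr sym wE]
  proof (intro ballI impI)
    fix p q assume p: "p \<in> ((H \<inter> PP j') - (G \<inter> PP j)) \<inter> set ?L" and q: "q \<in> ((H \<inter> PP j') - (G \<inter> PP j)) \<inter> set ?L"
      and ne: "fst p \<noteq> fst q"
    have prev: "s \<in> set (take j ?L)" if "s \<in> ((H \<inter> PP j') - (G \<inter> PP j)) \<inter> set ?L" "s \<noteq> ?L ! j" "j' = Suc j" "j < length ?L" for s
    proof -
      have "s \<in> set (take j' ?L)" using that(1) PP_Om[of j'] by auto
      moreover have "set (take j' ?L) = insert (?L ! j) (set (take j ?L))"
        using that(3,4) by (simp add: take_Suc_conv_app_nth)
      ultimately show ?thesis using that(2) by auto
    qed
    from new[OF p] new[OF q] show "(fst p, fst q) \<in> I"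
    proof (elim disjE conjE)
      assume "p \<in> H - G" "q \<in> H - G"
      then show ?thesis using cm p q ne by (auto simp: comm_def[OF IE irr sym wE])
    next
      assume "p \<in> H - G" "q \<in> G" "j' = Suc j" "j < length ?L" "q = ?L ! j"
      then show ?thesis using aux_dep[OF iG, of j p] prev[OF p] ne by auto
    next
      assume "p \<in> G" "j' = Suc j" "j < length ?L" "p = ?L ! j" "q \<in> H - G"
      then have "(fst q, fst p) \<in> I" using aux_dep[OF iG, of j q] prev[OF q] ne by auto
      then show ?thesis using I_sym[OF irr sym] by blast
    next
      assume "p = ?L ! j" "q = ?L ! j"
      then show ?thesis using ne by simp
    qed
  qed
  have "ideal I w (G \<inter> PP j)" "ideal I w (H \<inter> PP j')"
    using ideal_Int[OF irr sym] iG iH PP_ideal by auto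
  moreover have "G \<inter> PP j \<subseteq> H \<inter> PP j'" using sub PP_mono[OF jj(1)] by auto
  ultimately show ?thesis using cm' GH by (simp add: good_def[OF IE irr sym wE] Th_def j_def j'_def)
qed

end

context
  fixes E :: "'a set" and I :: "('a \<times> 'a) set" and w :: "'a list"
  assumes IE: "I \<subseteq> E \<times> E" and irr: "irrefl I" and sym: "sym I" and wE: "w \<in> lists E"
begin

definition Ft :: "nat \<Rightarrow> 'a list set \<times> 'a list set \<times> 'a list set \<Rightarrow> 'a list set \<times> 'a list set \<times> 'a list set" where
  "Ft t x = mkobj I w (Th w t (Gx x, Hx x))"

lemmas ctx = IE irr sym wE

lemma Ft_obj: "x \<in> ObW E I w \<Longrightarrow> Ft t x \<in> ObW E I w"
  unfolding Ft_def
  by (rule good_obj[OF ctx], rule Th_good[OF ctx], rule obj_good(1)[OF ctx])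

lemma Th_eq: "Th w t (X, Y) = (X \<inter> PP w (t div 2), Y \<inter> PP w (Suc t div 2))"
  by (simp add: Th_def[OF ctx])

lemma Ft_mono:
  assumes x: "x \<in> ObW E I w" and y: "y \<in> ObW E I w" and h: "HHW E I x y \<noteq> {}"
  shows "HHW E I (Ft t x) (Ft t y) \<noteq> {}"
proof -
  obtain h where h: "h \<in> HHW E I x y" using h by blast
  have c: "Gx y \<subseteq> Gx x" "Hx x \<subseteq> Hx y" using hom_contain[OF ctx x y h] by auto
  have gx: "good I w (Th w t (Gx x, Hx x))" by (rule Th_good[OF ctx obj_good(1)[OF ctx x]])
  have gy: "good I w (Th w t (Gx y, Hx y))" by (rule Th_good[OF ctx obj_good(1)[OF ctx y]])
  show ?thesis
    unfolding Ft_def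
    using hom_of_good[OF ctx gx[unfolded Th_eq] gy[unfolded Th_eq]] c
    by (simp add: Th_eq) blast
qed

lemma Ft_step:
  assumes x: "x \<in> ObW E I w"
  shows "even t \<Longrightarrow> HHW E I (Ft t x) (Ft (Suc t) x) \<noteq> {}"
    and "odd t \<Longrightarrow> HHW E I (Ft (Suc t) x) (Ft t x) \<noteq> {}"
proof -
  have g: "good I w (Th w s (Gx x, Hx x))" for s by (rule Th_good[OF ctx obj_good(1)[OF ctx x]])
  have m1: "PP w (t div 2) \<subseteq> PP w (Suc t div 2)" by (rule PP_mono[OF ctx]) simp
  have m2: "PP w (Suc t div 2) \<subseteq> PP w (Suc (Suc t) div 2)" by (rule PP_mono[OF ctx]) simp
  show "even t \<Longrightarrow> HHW E I (Ft t x) (Ft (Suc t) x) \<noteq> {}"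
  proof -
    assume e: "even t"
    then have "Suc t div 2 = t div 2" by presburger
    then show ?thesis
      unfolding Ft_def using hom_of_good[OF ctx g[of t, unfolded Th_eq] g[of "Suc t", unfolded Th_eq]] m2
      by (simp add: Th_eq) blast
  qed
  show "odd t \<Longrightarrow> HHW E I (Ft (Suc t) x) (Ft t x) \<noteq> {}"
  proof -
    assume o: "odd t"
    then have "Suc (Suc t) div 2 = Suc t div 2" by presburger
    then show ?thesis
      unfolding Ft_def using hom_of_good[OF ctx g[of "Suc t", unfolded Th_eq] g[of t, unfolded Th_eq]] m1
      by (simp add: Th_eq) blast
  qed
qed

lemma sub_cong: "(\<And>q. q \<in> set (occ w) \<Longrightarrow> q \<in> S \<longleftrightarrow> q \<in> S') \<Longrightarrow> sub w S = sub w S'"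
  unfolding sub_def[OF irr sym] by (metis (mono_tags, lifting) filter_cong)

lemma Ft_full:
  assumes x: "x \<in> ObW E I w"
  shows "Ft (2 * length w) x = x"
proof -
  have P: "q \<in> set (occ w) \<Longrightarrow> q \<in> PP w (length w)" for q using PP_full[OF ctx] by blast
  have "mkobj I w (Gx x \<inter> PP w (length w), Hx x \<inter> PP w (length w)) = mkobj I w (Gx x, Hx x)"
  proof -
    have "sub w ((Hx x \<inter> PP w (length w)) - (Gx x \<inter> PP w (length w))) = sub w (Hx x - Gx x)"
      by (rule sub_cong) (use P in auto)
    moreover have "sub w (- (Hx x \<inter> PP w (length w))) = sub w (- Hx x)"
      by (rule sub_cong) (use P in auto)
    moreover have "sub w (Gx x \<inter> PP w (length w)) = sub w (Gx x)"
      by (rule sub_cong) (use P in auto)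
    ultimately show ?thesis by (simp add: mkobj_def[OF ctx])
  qed
  moreover have "Suc (2 * length w) div 2 = length w" by simp
  ultimately show ?thesis unfolding Ft_def Th_eq using obj_good(2)[OF ctx x] by simp
qed

lemma Ft_zero: "Ft 0 x = mkobj I w ({}, {})"
  unfolding Ft_def Th_eq by (simp add: PP_0[OF ctx])

lemma good_empty: "good I w ({}, {})"
  by (simp add: good_def[OF ctx] comm_def[OF ctx] ideal_empty[OF irr sym])

theorem acyc: "connected_acyclic (ObW E I w) (HHW E I) (fcomp I)"
proof -
  define n where "n = length w"
  define m where "m = 2 * n"
  define Fs where "Fs k = Ft (m - k)" for k
  define p0 where "p0 = mkobj I w ({}, {})"
  let ?R = "\<lambda>x y. HHW E I x y \<noteq> {}"
  have p0: "p0 \<in> ObW E I w" unfolding p0_def by (rule good_obj[OF ctx good_empty])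
  have p0r: "?R p0 p0" unfolding p0_def by (rule hom_of_good[OF ctx good_empty good_empty]) auto
  have ok: "hom_ok (ObW E I w) ?R (Fs k)" if "k \<le> m" for k
    unfolding hom_ok_def Fs_def using Ft_obj Ft_mono by blast
  have first: "Fs 0 x = x" if "x \<in> ObW E I w" for x
    unfolding Fs_def m_def n_def using Ft_full[OF that] by simp
  have last: "Fs m x = p0" if "x \<in> ObW E I w" for x
    unfolding Fs_def p0_def by (simp add: Ft_zero)
  have steps: "(\<forall>x\<in>ObW E I w. ?R (Fs k x) (Fs (Suc k) x)) \<or> (\<forall>x\<in>ObW E I w. ?R (Fs (Suc k) x) (Fs k x))"
    if "k < m" for k
  proof -
    define t where "t = m - Suc k"
    have e1: "Fs k = Ft (Suc t)" and e2: "Fs (Suc k) = Ft t" using that by (auto simp: Fs_def t_def Suc_diff_Suc)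
    show ?thesis
    proof (cases "even t")
      case True
      then show ?thesis unfolding e1 e2 using Ft_step(1) by blast
    next
      case False
      then show ?thesis unfolding e1 e2 using Ft_step(2) by blast
    qed
  qed
  note A = abstract_acyclic[of m "ObW E I w" ?R Fs p0, OF ok first last p0 p0r steps]
  have ne: "ObW E I w \<noteq> {}" using p0 by blast
  have closH: "fcomp I g f \<in> HHW E I x z"
    if "x \<in> ObW E I w" "y \<in> ObW E I w" "z \<in> ObW E I w" "f \<in> HHW E I x y" "g \<in> HHW E I y z" for x y z f g
    using clos[OF ctx that] .
  have thinH: "f = g"
    if "x \<in> ObW E I w" "y \<in> ObW E I w" "f \<in> HHW E I x y" "g \<in> HHW E I x y" for x y f g
    using thin[OF ctx that] .
  show ?thesis
    by (rule transfer_acyclic[of "ObW E I w" "HHW E I" "fcomp I", OF closH thinH ne A(1) A(2)])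
qed

end


theorem mainTheorem3:
  fixes E :: "'a set" and I :: "('a \<times> 'a) set"
  assumes "I \<subseteq> E \<times> E" and "irrefl I" and "sym I"
  shows "\<forall>d \<in> pcmon E I. connected_acyclic (comma_objs E I d) (comma_hom E I) (fcomp I)"
proof
  fix d assume "d \<in> pcmon E I"
  then obtain w where w: "w \<in> lists E" "d = trace I w" by (auto simp: pcmon_def)
  show "connected_acyclic (comma_objs E I d) (comma_hom E I) (fcomp I)"
    using acyc[OF assms w(1)] w(2) by simp
qed

end
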